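(* Let $M\in\mathbb Z$, $s\in\{0,\dots,NL-1\}$ with $M\equiv s\pmod{NL}$, $l\ge0$ and $n=s+lNL$. For every $d\ge0$, the subspace $V^d_{M,n}\subset\wedge^nV_{\mathrm{aff}}$ is invariant under the vertical action $\pi^v_{(n)}$ of $U'_q(\widehat{\mathfrak{sl}}_N)$ (for any parameters $p\in q^{\mathbb Z}$, $\nu(1),\dots,\nu(L)\in\mathbb Z$).
   Context: Let $N\ge2$, $L\ge 1$ be integers, $q$ an indeterminate and $\mathbb K=\mathbb Q(q^{1/(2N)})$. Let $\mathbb K^L$ have basis $\mathfrak e_1,\dots,\mathfrak e_L$, $\mathbb K^N$ have basis $\mathfrak v_1,\dots,\mathfrak v_N$, and $V_{\mathrm{aff}}=\mathbb K[z^{\pm1}]\otimes\mathbb K^L\otimes\mathbb K^N$. Identify $V_{\mathrm{aff}}^{\otimes n}=\mathbb K[z_1^{\pm1},\dots,z_n^{\pm1}]\otimes(\mathbb K^L)^{\otimes n}\otimes(\mathbb K^N)^{\otimes n}$. With $E_{a,b}$ the matrix units of $\mathbb K^L$ put $R(z_1,z_2)=(q^2z_1-z_2)\sum_{a}E_{a,a}\otimes E_{a,a}+q(z_1-z_2)\sum_{a\neq b}E_{a,a}\otimes E_{b,b}+z_1(q^2-1)\sum_{a<b}E_{a,b}\otimes E_{b,a}+z_2(q^2-1)\sum_{a>b}E_{a,b}\otimes E_{b,a}$, $s$ the exchange of the two factors of $(\mathbb K[z^{\pm1}]\otimes\mathbb K^L)^{\otimes 2}$, $\overset{c}{T}=\frac{z_1-q^2z_2}{z_1-z_2}\bigl(1-s\cdot\frac{R(z_1,z_2)}{q^2z_1-z_2}\bigr)-1$,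 and $\overset{s}{T}$ on $(\mathbb K^N)^{\otimes 2}$: $\mathfrak v_{\epsilon_1}\otimes\mathfrak v_{\epsilon_2}\mapsto q^2\mathfrak v_{\epsilon_1}\otimes\mathfrak v_{\epsilon_2}$ if $\epsilon_1=\epsilon_2$, $q\,\mathfrak v_{\epsilon_2}\otimes\mathfrak v_{\epsilon_1}$ if $\epsilon_1<\epsilon_2$, $q\,\mathfrak v_{\epsilon_2}\otimes\mathfrak v_{\epsilon_1}+(q^2-1)\mathfrak v_{\epsilon_1}\otimes\mathfrak v_{\epsilon_2}$ if $\epsilon_1>\epsilon_2$; $\overset{c}{T}_i,\overset{s}{T}_i$ act in factors $i,i+1$. $\wedge^nV_{\mathrm{aff}}=V_{\mathrm{aff}}^{\otimes n}/\sum_{i}\mathrm{Im}(\overset{c}{T}_i-\overset{s}{T}_i)$ with quotient map $\wedge$. Write $k=\bar k-N(\dot k+L\underline k)$ ($\bar k\in\{1..N\}$, $\dot k\in\{1..L\}$, $\underline k\in\mathbb Z$), $u_k=z^{\underline k}\mathfrak e_{\dot k}\mathfrak v_{\bar k}$; $u_{k_1}\wedge\cdots\wedge u_{k_n}$ is the image of $u_{k_1}\otimes\cdots\otimes u_{k_n}$, normally ordered if $k_1>\cdots>k_n$ (these form a basis of $\wedge^nV_{\mathrm{aff}}$). Gradings: let $o_i=M-i+1$. For $r\ge0$, $V_{M,r}\subset\wedge^rV_{\mathrm{aff}}$ is the span of the normally ordered $u_{k_1}\wedge\cdots\wedge u_{k_r}$ with $\underline{k_r}\le\underline{o_r}$ ($V_{M,0}=\mathbb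 K$), graded by $\deg=\sum_{i=1}^r(\underline{o_i}-\underline{k_i})$; $V^d_{M,r}$ is its degree-$d$ component. Cherednik operators: fix $p\in q^{\mathbb Z}$ and integers $\nu(1),\dots,\nu(L)$. On $\mathbb K[z^{\pm1}]\otimes\mathbb K^L$ let $q^{\nu^\vee}(z^m\mathfrak e_a)=q^{\nu(L+1-a)}z^m\mathfrak e_a$, $p^D(z^m\mathfrak e_a)=p^mz^m\mathfrak e_a$; $(X)_i$ denotes $X$ in the $i$th factor. Let $s_i$ exchange factors $i,i+1$, $\tilde T_{i,i+1}=-q(\overset{c}{T}_i)^{-1}$, and $Y_i^{(n)}=\tilde T_{i,i+1}^{-1}\cdots\tilde T_{n-1,n}^{-1}s_{n-1}\cdots s_1(p^D)_1(q^{\nu^\vee})_1\tilde T_{1,2}\cdots\tilde T_{i-1,i}$ on $(\mathbb K[z^{\pm1}]\otimes\mathbb K^L)^{\otimes n}$. For $r\ge0$ write $r=s'+NLm'$, $0\le s'<NL$, $\underline{\underline r}=Nm'$. Vertical action: with $e_{i,j}$ the matrix units of $\mathbb K^N$ (indices mod $N$), $k_i=q^{e_{i,i}-e_{i+1,i+1}}$ and $(X)_j$ denoting $X$ in the $j$th factor of $(\mathbb K^N)^{\otimes n}$, for $f\in(\mathbb K[z^{\pm1}]\otimes\mathbb K^L)^{\otimes n}$, $v\in(\mathbb K^N)^{\otimes n}$ and Chevalley generators $E_i,F_i,K_i$ ($0\le i<N$) of $U'_q(\widehat{\mathfrak{sl}}_N)$: $\pi^v_{(n)}(E_i)\wedge(f\otimes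 v)=\wedge\sum_{j=1}^n(q^{-\underline{\underline n}}Y_j^{(n)})^{-\delta_{i,0}}f\otimes(e_{i,i+1})_j(k_i)_{j+1}\cdots(k_i)_nv$, $\pi^v_{(n)}(F_i)\wedge(f\otimes v)=\wedge\sum_{j=1}^n(q^{-\underline{\underline n}}Y_j^{(n)})^{\delta_{i,0}}f\otimes(e_{i+1,i})_j(k_i^{-1})_1\cdots(k_i^{-1})_{j-1}v$, $\pi^v_{(n)}(K_i)\wedge(f\otimes v)=\wedge f\otimes(k_i)_1\cdots(k_i)_nv$; this is a well-defined $U'_q(\widehat{\mathfrak{sl}}_N)$-action on $\wedge^nV_{\mathrm{aff}}$ (Varagnolo–Vasserot duality). *)

theory Defs
  imports "HOL-Computational_Algebra.Fraction_Field" "HOL-Computational_Algebra.Polynomial"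
          "HOL-Library.Function_Algebras"
begin

text \<open>K = Q(t) with t = q^(1/(2N)), realised as the fraction field of Q[t]; q = t^(2N).\<close>
type_synonym kf = "rat poly fract"

text \<open>A basis label of V_aff^{tensor n} = K[z_1^pm..z_n^pm] (x) (K^L)^{tensor n} (x) (K^N)^{tensor n}:
  (exponents of z_1..z_n, indices of e's in 1..L, indices of v's in 1..N).\<close>
type_synonym lbl = "int list \<times> nat list \<times> nat list"
type_synonym vec = "lbl \<Rightarrow> kf"

definition qpar :: "nat \<Rightarrow> kf" where
  "qpar N = (Fraction_Field.Fract [:0, 1:] 1) ^ (2 * N)"

definition wf_lbl :: "nat \<Rightarrow> nat \<Rightarrow> nat \<Rightarrow> lbl \<Rightarrow> bool" where
  "wf_lbl N L n x = (case x of (ex, es, vs) \<Rightarrow>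
      length ex = n \<and> length es = n \<and> length vs = n \<and>
      (\<forall>a\<in>set es. 1 \<le> a \<and> a \<le> L) \<and> (\<forall>b\<in>set vs. 1 \<le> b \<and> b \<le> N))"

definition Vn :: "nat \<Rightarrow> nat \<Rightarrow> nat \<Rightarrow> vec set" where
  "Vn N L n = {f. finite {x. f x \<noteq> 0} \<and> (\<forall>x. f x \<noteq> 0 \<longrightarrow> wf_lbl N L n x)}"

definition bv :: "lbl \<Rightarrow> vec" where
  "bv x = (\<lambda>y. if y = x then 1 else 0)"

definition sc :: "kf \<Rightarrow> vec \<Rightarrow> vec" where
  "sc c f = (\<lambda>y. c * f y)"

definition lin :: "(lbl \<Rightarrow> vec) \<Rightarrow> vec \<Rightarrow> vec" where
  "lin F f = (\<lambda>y. \<Sum>x\<in>{x. f x \<noteq> 0}. f x * F x y)"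

definition lspan :: "vec set \<Rightarrow> vec set" where
  "lspan S = {f. \<exists>A c. finite A \<and> A \<subseteq> S \<and> f = (\<Sum>g\<in>A. sc (c g) g)}"

section \<open>Operators on the z/e part (factor indices are 1-based)\<close>

definition zmul :: "nat \<Rightarrow> vec \<Rightarrow> vec" where
  "zmul j f = (\<lambda>(ex, es, vs). f (ex[j - 1 := ex ! (j - 1) - 1], es, vs))"

definition shift :: "nat \<Rightarrow> lbl \<Rightarrow> lbl" where
  "shift j x = (case x of (ex, es, vs) \<Rightarrow> (ex[j - 1 := ex ! (j - 1) + 1], es, vs))"

definition swp :: "nat \<Rightarrow> 'a list \<Rightarrow> 'a list" where
  "swp i xs = xs[i - 1 := xs ! i, i := xs ! (i - 1)]"

definition sop :: "nat \<Rightarrow> vec \<Rightarrow> vec" where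
  "sop i f = (\<lambda>(ex, es, vs). f (swp i ex, swp i es, vs))"

definition Rop :: "nat \<Rightarrow> nat \<Rightarrow> vec \<Rightarrow> vec" where
  "Rop N i = lin (\<lambda>x. case x of (ex, es, vs) \<Rightarrow>
     (let q = qpar N; a = es ! (i - 1); b = es ! i; y = (ex, swp i es, vs) in
      if a = b then sc (q ^ 2) (bv (shift i x)) - bv (shift (Suc i) x)
      else sc q (bv (shift i x) - bv (shift (Suc i) x))
           + sc (q ^ 2 - 1) (bv (shift (if b < a then i else Suc i) y))))"

definition Tsop :: "nat \<Rightarrow> nat \<Rightarrow> vec \<Rightarrow> vec" where
  "Tsop N i = lin (\<lambda>x. case x of (ex, es, vs) \<Rightarrow>
     (let q = qpar N; e1 = vs ! (i - 1); e2 = vs ! i; y = (ex, es, swp i vs) in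
      if e1 = e2 then sc (q ^ 2) (bv x)
      else if e1 < e2 then sc q (bv y)
      else sc q (bv y) + sc (q ^ 2 - 1) (bv x)))"

text \<open>T^c_i = (z_i - q^2 z_{i+1})/(z_i - z_{i+1}) (1 - s_i R/(q^2 z_i - z_{i+1})) - 1, i.e. the unique
  element h of V_aff^{tensor n} with
  (z_i - z_{i+1})(q^2 z_{i+1} - z_i)(h + f) = (z_i - q^2 z_{i+1})((q^2 z_{i+1} - z_i) f - s_i(R f)).\<close>
definition Tcop :: "nat \<Rightarrow> nat \<Rightarrow> nat \<Rightarrow> nat \<Rightarrow> vec \<Rightarrow> vec" where
  "Tcop N L n i f =
    (let q = qpar N;
         Z1 = (\<lambda>g. zmul i g - zmul (Suc i) g);
         Z2 = (\<lambda>g. sc (q ^ 2) (zmul (Suc i) g) - zmul i g);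
         Z3 = (\<lambda>g. zmul i g - sc (q ^ 2) (zmul (Suc i) g))
     in THE h. h \<in> Vn N L n \<and> Z1 (Z2 (h + f)) = Z3 (Z2 f - sop i (Rop N i f)))"

definition Tc_inv :: "nat \<Rightarrow> nat \<Rightarrow> nat \<Rightarrow> nat \<Rightarrow> vec \<Rightarrow> vec" where
  "Tc_inv N L n i = the_inv_into (Vn N L n) (Tcop N L n i)"

definition Tt :: "nat \<Rightarrow> nat \<Rightarrow> nat \<Rightarrow> nat \<Rightarrow> vec \<Rightarrow> vec" where
  "Tt N L n i f = sc (- qpar N) (Tc_inv N L n i f)"

definition Tt_inv :: "nat \<Rightarrow> nat \<Rightarrow> nat \<Rightarrow> nat \<Rightarrow> vec \<Rightarrow> vec" where
  "Tt_inv N L n i f = sc (- inverse (qpar N)) (Tcop N L n i f)"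

text \<open>(p^D)_1 with p = q^pe, and (q^{nu^vee})_1.\<close>
definition pD1 :: "nat \<Rightarrow> int \<Rightarrow> vec \<Rightarrow> vec" where
  "pD1 N pe f = (\<lambda>(ex, es, vs). ((qpar N powi pe) powi (ex ! 0)) * f (ex, es, vs))"

definition qnu1 :: "nat \<Rightarrow> nat \<Rightarrow> (nat \<Rightarrow> int) \<Rightarrow> vec \<Rightarrow> vec" where
  "qnu1 N L \<nu> f = (\<lambda>(ex, es, vs). (qpar N powi \<nu> (L + 1 - es ! 0)) * f (ex, es, vs))"

text \<open>Cherednik operator Y_i^{(n)} (composition, rightmost factor acts first).\<close>
definition Yop :: "nat \<Rightarrow> nat \<Rightarrow> nat \<Rightarrow> int \<Rightarrow> (nat \<Rightarrow> int) \<Rightarrow> nat \<Rightarrow> vec \<Rightarrow> vec" where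
  "Yop N L n pe \<nu> i = foldr (\<circ>)
     (map (Tt_inv N L n) [i..<n] @ map sop (rev [1..<n]) @ [pD1 N pe, qnu1 N L \<nu>]
      @ map (Tt N L n) [1..<i]) id"

text \<open>double-underline r = N m' where r = s' + N L m', 0 <= s' < N L.\<close>
definition nn :: "nat \<Rightarrow> nat \<Rightarrow> nat \<Rightarrow> nat" where
  "nn N L r = N * (r div (N * L))"

definition Yq :: "nat \<Rightarrow> nat \<Rightarrow> nat \<Rightarrow> int \<Rightarrow> (nat \<Rightarrow> int) \<Rightarrow> nat \<Rightarrow> vec \<Rightarrow> vec" where
  "Yq N L n pe \<nu> j f = sc (qpar N powi (- int (nn N L n))) (Yop N L n pe \<nu> j f)"

definition Yq_inv :: "nat \<Rightarrow> nat \<Rightarrow> nat \<Rightarrow> int \<Rightarrow> (nat \<Rightarrow> int) \<Rightarrow> nat \<Rightarrow> vec \<Rightarrow> vec" where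
  "Yq_inv N L n pe \<nu> j = the_inv_into (Vn N L n) (Yq N L n pe \<nu> j)"

section \<open>Spin operators for the vertical action (indices of K^N taken mod N)\<close>

definition rep :: "nat \<Rightarrow> nat \<Rightarrow> nat" where
  "rep N i = (if i mod N = 0 then N else i mod N)"

text \<open>eigenvalue of k_i = q^{e_{ii} - e_{i+1,i+1}} on v_eps.\<close>
definition kcoef :: "nat \<Rightarrow> nat \<Rightarrow> nat \<Rightarrow> kf" where
  "kcoef N i \<epsilon> = qpar N powi ((if \<epsilon> mod N = i mod N then 1 else 0)
                               - (if \<epsilon> mod N = (i + 1) mod N then 1 else 0))"

text \<open>(e_{i,i+1})_j (k_i)_{j+1} ... (k_i)_n\<close>
definition EvOp :: "nat \<Rightarrow> nat \<Rightarrow> nat \<Rightarrow> nat \<Rightarrow> vec \<Rightarrow> vec" where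
  "EvOp N n i j = lin (\<lambda>x. case x of (ex, es, vs) \<Rightarrow>
     (if vs ! (j - 1) mod N = (i + 1) mod N
      then sc (\<Prod>m\<in>{j+1..n}. kcoef N i (vs ! (m - 1))) (bv (ex, es, vs[j - 1 := rep N i]))
      else 0))"

text \<open>(e_{i+1,i})_j (k_i^{-1})_1 ... (k_i^{-1})_{j-1}\<close>
definition FvOp :: "nat \<Rightarrow> nat \<Rightarrow> nat \<Rightarrow> nat \<Rightarrow> vec \<Rightarrow> vec" where
  "FvOp N n i j = lin (\<lambda>x. case x of (ex, es, vs) \<Rightarrow>
     (if vs ! (j - 1) mod N = i mod N
      then sc (\<Prod>m\<in>{1..<j}. inverse (kcoef N i (vs ! (m - 1))))
              (bv (ex, es, vs[j - 1 := rep N (i + 1)]))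
      else 0))"

text \<open>(k_i)_1 ... (k_i)_n\<close>
definition KvOp :: "nat \<Rightarrow> nat \<Rightarrow> nat \<Rightarrow> vec \<Rightarrow> vec" where
  "KvOp N n i = lin (\<lambda>x. case x of (ex, es, vs) \<Rightarrow>
     sc (\<Prod>m\<in>{1..n}. kcoef N i (vs ! (m - 1))) (bv x))"

definition piE :: "nat \<Rightarrow> nat \<Rightarrow> nat \<Rightarrow> int \<Rightarrow> (nat \<Rightarrow> int) \<Rightarrow> nat \<Rightarrow> vec \<Rightarrow> vec" where
  "piE N L n pe \<nu> i f =
     (\<Sum>j\<in>{1..n}. (if i = 0 then Yq_inv N L n pe \<nu> j else id) (EvOp N n i j f))"

definition piF :: "nat \<Rightarrow> nat \<Rightarrow> nat \<Rightarrow> int \<Rightarrow> (nat \<Rightarrow> int) \<Rightarrow> nat \<Rightarrow> vec \<Rightarrow> vec" where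
  "piF N L n pe \<nu> i f =
     (\<Sum>j\<in>{1..n}. (if i = 0 then Yq N L n pe \<nu> j else id) (FvOp N n i j f))"

definition piK :: "nat \<Rightarrow> nat \<Rightarrow> nat \<Rightarrow> vec \<Rightarrow> vec" where
  "piK N n i f = KvOp N n i f"

text \<open>Kernel of the quotient map: sum of the images of T^c_i - T^s_i, 1 <= i < n.\<close>
definition Wsub :: "nat \<Rightarrow> nat \<Rightarrow> nat \<Rightarrow> vec set" where
  "Wsub N L n = lspan {Tcop N L n i f - Tsop N i f | i f. 1 \<le> i \<and> i < n \<and> f \<in> Vn N L n}"

text \<open>k = bar k - N (dot k + L und k), bar k in 1..N, dot k in 1..L.\<close>
definition kbar :: "nat \<Rightarrow> int \<Rightarrow> nat" where
  "kbar N k = nat ((k - 1) mod int N + 1)"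

definition kdot :: "nat \<Rightarrow> nat \<Rightarrow> int \<Rightarrow> nat" where
  "kdot N L k = nat (((int (kbar N k) - k) div int N - 1) mod int L + 1)"

definition kund :: "nat \<Rightarrow> nat \<Rightarrow> int \<Rightarrow> int" where
  "kund N L k = ((int (kbar N k) - k) div int N - int (kdot N L k)) div int L"

text \<open>label of u_{k_1} (x) ... (x) u_{k_n}\<close>
definition ulab :: "nat \<Rightarrow> nat \<Rightarrow> int list \<Rightarrow> lbl" where
  "ulab N L ks = (map (kund N L) ks, map (kdot N L) ks, map (kbar N) ks)"

text \<open>Normally ordered labels spanning V^d_{M,n}; o_i = M - i + 1.\<close>
definition Bd :: "nat \<Rightarrow> nat \<Rightarrow> int \<Rightarrow> nat \<Rightarrow> int \<Rightarrow> lbl set" where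
  "Bd N L M n d = {ulab N L ks | ks. length ks = n \<and> sorted_wrt (>) ks \<and>
      (n > 0 \<longrightarrow> kund N L (last ks) \<le> kund N L (M - int n + 1)) \<and>
      (\<Sum>i=1..n. kund N L (M - int i + 1) - kund N L (ks ! (i - 1))) = d}"

text \<open>Representatives in V_aff^{tensor n} of V^d_{M,n}.\<close>
definition VMd :: "nat \<Rightarrow> nat \<Rightarrow> int \<Rightarrow> nat \<Rightarrow> int \<Rightarrow> vec set" where
  "VMd N L M n d = lspan (bv ` Bd N L M n d)"

text \<open>phi preserves the image of S in the quotient by W (phi given on representatives).\<close>
definition stable_mod :: "vec set \<Rightarrow> vec set \<Rightarrow> (vec \<Rightarrow> vec) \<Rightarrow> bool" where
  "stable_mod S W \<phi> = (\<forall>f\<in>S. \<exists>g\<in>S. \<phi> f - g \<in> W)"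

end

theory Submission
  imports Defs
begin


lemma sum_app: "(\<Sum>x\<in>A. g x) y = (\<Sum>x\<in>A. g x y)" for g :: "'a \<Rightarrow> 'b \<Rightarrow> 'c::comm_monoid_add"
  by (induction A rule: infinite_finite_induct) auto

definition supp :: "vec \<Rightarrow> lbl set" where "supp f = {x. f x \<noteq> 0}"

lemma sc_apply[simp]: "sc c f y = c * f y" by (simp add: sc_def)
lemma bv_apply: "bv x y = (if y = x then 1 else 0)" by (simp add: bv_def)

lemma sc_add: "sc c (f + g) = sc c f + sc c g" by (rule ext) (simp add: algebra_simps)
lemma sc_diff: "sc c (f - g) = sc c f - sc c g" by (rule ext) (simp add: algebra_simps)
lemma sc_minus: "sc c (- f) = - sc c f" by (rule ext) (simp add: algebra_simps)
lemma sc_sc: "sc a (sc b f) = sc (a * b) f" by (rule ext) (simp add: algebra_simps)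
lemma sc_add_left: "sc (a + b) f = sc a f + sc b f" by (rule ext) (simp add: algebra_simps)
lemma sc_diff_left: "sc (a - b) f = sc a f - sc b f" by (rule ext) (simp add: algebra_simps)
lemma sc_one[simp]: "sc 1 f = f" by (rule ext) simp
lemma sc_zero[simp]: "sc 0 f = 0" by (rule ext) simp
lemma sc_zero2[simp]: "sc c 0 = 0" by (rule ext) simp
lemma sc_neg1: "sc (-1) f = - f" by (rule ext) simp
lemma sc_sum: "sc c (\<Sum>x\<in>A. g x) = (\<Sum>x\<in>A. sc c (g x))"
  by (rule ext) (simp add: sum_app sum_distrib_left)

lemma Vn_iff: "f \<in> Vn N L n \<longleftrightarrow> finite (supp f) \<and> (\<forall>x\<in>supp f. wf_lbl N L n x)"
  by (auto simp: Vn_def supp_def)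

lemma Vn_zero[simp]: "0 \<in> Vn N L n" by (simp add: Vn_iff supp_def)

lemma supp_add: "supp (f + g) \<subseteq> supp f \<union> supp g" by (auto simp: supp_def)
lemma supp_diff: "supp (f - g) \<subseteq> supp f \<union> supp g" by (auto simp: supp_def)
lemma supp_sc: "supp (sc c f) \<subseteq> supp f" by (auto simp: supp_def)
lemma supp_uminus: "supp (- f) = supp f" by (auto simp: supp_def)
lemma supp_bv: "supp (bv x) = {x}" by (auto simp: supp_def bv_def)

lemma Vn_add[intro]: "f \<in> Vn N L n \<Longrightarrow> g \<in> Vn N L n \<Longrightarrow> f + g \<in> Vn N L n"
  unfolding Vn_iff using supp_add by (meson UnE finite_Un finite_subset subsetD)
lemma Vn_diff[intro]: "f \<in> Vn N L n \<Longrightarrow> g \<in> Vn N L n \<Longrightarrow> f - g \<in> Vn N L n"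
  unfolding Vn_iff using supp_diff by (meson UnE finite_Un finite_subset subsetD)
lemma Vn_sc[intro]: "f \<in> Vn N L n \<Longrightarrow> sc c f \<in> Vn N L n"
  unfolding Vn_iff using supp_sc by (meson finite_subset subsetD)
lemma Vn_uminus[intro]: "f \<in> Vn N L n \<Longrightarrow> - f \<in> Vn N L n"
  unfolding Vn_iff supp_uminus by simp
lemma Vn_sum[intro]: "(\<And>x. x \<in> A \<Longrightarrow> g x \<in> Vn N L n) \<Longrightarrow> (\<Sum>x\<in>A. g x) \<in> Vn N L n"
  by (induction A rule: infinite_finite_induct) auto
lemma Vn_bv[intro]: "wf_lbl N L n x \<Longrightarrow> bv x \<in> Vn N L n"
  by (simp add: Vn_iff supp_bv)

lemma decomp: "finite (supp f) \<Longrightarrow> f = (\<Sum>x\<in>supp f. sc (f x) (bv x))"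
proof (rule ext)
  fix y assume fin: "finite (supp f)"
  have "(\<Sum>x\<in>supp f. sc (f x) (bv x)) y = (\<Sum>x\<in>supp f. if x = y then f y else 0)"
    by (simp add: sum_app bv_def) (rule sum.cong, auto)
  also have "\<dots> = f y" using fin by (simp add: sum.delta' supp_def)
  finally show "f y = (\<Sum>x\<in>supp f. sc (f x) (bv x)) y" by simp
qed

lemma decomp_superset: "finite A \<Longrightarrow> supp f \<subseteq> A \<Longrightarrow> f = (\<Sum>x\<in>A. sc (f x) (bv x))"
proof -
  assume a: "finite A" "supp f \<subseteq> A"
  have "f = (\<Sum>x\<in>supp f. sc (f x) (bv x))" using a by (intro decomp) (auto intro: finite_subset)
  also have "\<dots> = (\<Sum>x\<in>A. sc (f x) (bv x))"
    using a by (intro sum.mono_neutral_left) (auto simp: supp_def)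
  finally show ?thesis .
qed

definition linV :: "nat \<Rightarrow> nat \<Rightarrow> nat \<Rightarrow> (vec \<Rightarrow> vec) \<Rightarrow> bool" where
  "linV N L n P = (\<forall>f\<in>Vn N L n. \<forall>g\<in>Vn N L n. P (f + g) = P f + P g \<and> (\<forall>c. P (sc c f) = sc c (P f)))"

lemma linV_zero: "linV N L n P \<Longrightarrow> P 0 = 0"
  unfolding linV_def using Vn_zero by (metis sc_zero)

lemma linV_sum: "linV N L n P \<Longrightarrow> (\<And>x. x \<in> A \<Longrightarrow> g x \<in> Vn N L n) \<Longrightarrow>
   P (\<Sum>x\<in>A. g x) = (\<Sum>x\<in>A. P (g x))"
proof (induction A rule: infinite_finite_induct)
  case (infinite A) then show ?case using linV_zero[of N L n P] by (metis sum.infinite)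
next
  case empty then show ?case using linV_zero[of N L n P] by (metis sum.empty)
next
  case (insert x F)
  have "P (\<Sum>x\<in>insert x F. g x) = P (g x + (\<Sum>x\<in>F. g x))" using insert by (subst sum.insert) auto
  also have "\<dots> = P (g x) + P (\<Sum>x\<in>F. g x)" using insert.prems insert.hyps
    unfolding linV_def by (meson Vn_sum insertCI)
  also have "\<dots> = P (g x) + (\<Sum>x\<in>F. P (g x))" using insert by auto
  also have "\<dots> = (\<Sum>x\<in>insert x F. P (g x))" using insert by (subst sum.insert) auto
  finally show ?case .
qed

lemma linV_basis_eq:
  assumes "linV N L n P" "linV N L n Q" "\<And>x. wf_lbl N L n x \<Longrightarrow> P (bv x) = Q (bv x)"
    and "f \<in> Vn N L n"
  shows "P f = Q f"
proof -
  have fin: "finite (supp f)" and w: "\<And>x. x \<in> supp f \<Longrightarrow> wf_lbl N L n x" using assms(4) by (auto simp: Vn_iff)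
  have d: "f = (\<Sum>x\<in>supp f. sc (f x) (bv x))" using decomp fin by blast
  have "P f = (\<Sum>x\<in>supp f. P (sc (f x) (bv x)))" by (subst d, rule linV_sum[OF assms(1)]) (blast intro: Vn_sc Vn_bv w)
  also have "\<dots> = (\<Sum>x\<in>supp f. Q (sc (f x) (bv x)))"
  proof (rule sum.cong)
    fix x assume x: "x \<in> supp f"
    have b: "bv x \<in> Vn N L n" using w[OF x] by blast
    have "P (sc (f x) (bv x)) = sc (f x) (P (bv x))" using assms(1) b unfolding linV_def by blast
    also have "\<dots> = sc (f x) (Q (bv x))" using assms(3) w[OF x] by simp
    also have "\<dots> = Q (sc (f x) (bv x))" using assms(2) b unfolding linV_def by metis
    finally show "P (sc (f x) (bv x)) = Q (sc (f x) (bv x))" .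
  qed simp
  also have "\<dots> = Q f" by (subst (2) d, rule linV_sum[OF assms(2), symmetric]) (blast intro: Vn_sc Vn_bv w)
  finally show ?thesis .
qed

lemma lin_superset: "finite A \<Longrightarrow> supp f \<subseteq> A \<Longrightarrow> lin F f = (\<lambda>y. \<Sum>x\<in>A. f x * F x y)"
  unfolding lin_def supp_def[symmetric]
  by (rule ext, rule sum.mono_neutral_left) (auto simp: supp_def)

lemma lin_bv[simp]: "lin F (bv x) = F x"
  by (rule ext) (simp add: lin_def bv_def)

lemma lin_add: "finite (supp f) \<Longrightarrow> finite (supp g) \<Longrightarrow> lin F (f + g) = lin F f + lin F g"
proof -
  assume a: "finite (supp f)" "finite (supp g)"
  let ?A = "supp f \<union> supp g"
  have "lin F (f + g) = (\<lambda>y. \<Sum>x\<in>?A. (f + g) x * F x y)" using a supp_add by (intro lin_superset) auto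
  moreover have "lin F f = (\<lambda>y. \<Sum>x\<in>?A. f x * F x y)" using a by (intro lin_superset) auto
  moreover have "lin F g = (\<lambda>y. \<Sum>x\<in>?A. g x * F x y)" using a by (intro lin_superset) auto
  ultimately show ?thesis by (auto simp: algebra_simps sum.distrib)
qed

lemma lin_sc: "finite (supp f) \<Longrightarrow> lin F (sc c f) = sc c (lin F f)"
proof -
  assume a: "finite (supp f)"
  have "lin F (sc c f) = (\<lambda>y. \<Sum>x\<in>supp f. (sc c f) x * F x y)" using a supp_sc by (intro lin_superset) auto
  moreover have "lin F f = (\<lambda>y. \<Sum>x\<in>supp f. f x * F x y)" using a by (intro lin_superset) auto
  ultimately show ?thesis by (auto simp: algebra_simps sum_distrib_left)
qed

lemma linV_lin: "linV N L n (lin F)"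
  unfolding linV_def using lin_add lin_sc by (simp add: Vn_iff)

lemma lin_Vn: "f \<in> Vn N L n \<Longrightarrow> (\<And>x. wf_lbl N L n x \<Longrightarrow> F x \<in> Vn N L n) \<Longrightarrow> lin F f \<in> Vn N L n"
proof -
  assume f: "f \<in> Vn N L n" and F: "\<And>x. wf_lbl N L n x \<Longrightarrow> F x \<in> Vn N L n"
  have fin: "finite (supp f)" and w: "\<And>x. x \<in> supp f \<Longrightarrow> wf_lbl N L n x" using f by (auto simp: Vn_iff)
  have "lin F f = lin F (\<Sum>x\<in>supp f. sc (f x) (bv x))" using decomp fin by metis
  also have "\<dots> = (\<Sum>x\<in>supp f. lin F (sc (f x) (bv x)))"
    by (rule linV_sum[OF linV_lin[of N L n]]) (blast intro: Vn_sc Vn_bv w)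
  also have "\<dots> = (\<Sum>x\<in>supp f. sc (f x) (F x))" by (simp add: lin_sc supp_bv)
  moreover have "(\<Sum>x\<in>supp f. sc (f x) (F x)) \<in> Vn N L n"
  proof (rule Vn_sum)
    fix x assume "x \<in> supp f" then show "sc (f x) (F x) \<in> Vn N L n" using F w by blast
  qed
  ultimately show ?thesis by simp
qed


lemma zmul_apply: "zmul j f (ex, es, vs) = f (ex[j - 1 := ex ! (j - 1) - 1], es, vs)"
  by (simp add: zmul_def)

lemma zmul_add: "zmul j (f + g) = zmul j f + zmul j g" by (rule ext) (auto simp: zmul_def)
lemma zmul_diff: "zmul j (f - g) = zmul j f - zmul j g" by (rule ext) (auto simp: zmul_def)
lemma zmul_minus: "zmul j (- f) = - zmul j f" by (rule ext) (auto simp: zmul_def)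
lemma zmul_sc: "zmul j (sc c f) = sc c (zmul j f)" by (rule ext) (auto simp: zmul_def)
lemma zmul_zero[simp]: "zmul j 0 = 0" by (rule ext) (auto simp: zmul_def)

lemma zmul_comm: "zmul j (zmul k f) = zmul k (zmul j f)"
proof (rule ext)
  fix y :: lbl
  obtain ex es vs where y: "y = (ex, es, vs)" by (cases y) auto
  show "zmul j (zmul k f) y = zmul k (zmul j f) y"
  proof (cases "j - 1 = k - 1")
    case True then show ?thesis by (simp add: y zmul_def)
  next
    case False
    then show ?thesis by (simp add: y zmul_def list_update_swap nth_list_update)
  qed
qed

lemmas zsimps = zmul_add zmul_diff zmul_minus zmul_sc sc_add sc_diff sc_sc sc_minus

definition "Z1 i g = zmul i g - zmul (Suc i) g"
definition "Z2 N i g = sc (qpar N ^ 2) (zmul (Suc i) g) - zmul i g"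
definition "Z3 N i g = zmul i g - sc (qpar N ^ 2) (zmul (Suc i) g)"

lemma test_Z: "zmul (Suc i) (Z3 N i (Z2 N i f)) + Z1 i (Z2 N i (Z3 N i f)) = Z3 N i (zmul i (Z2 N i f))"
  unfolding Z1_def Z2_def Z3_def 
  by (simp only: zsimps) (simp add: zmul_comm)


definition linop :: "(vec \<Rightarrow> vec) \<Rightarrow> bool" where
  "linop P = (\<forall>f g c. P (f + g) = P f + P g \<and> P (sc c f) = sc c (P f))"

lemma linop_linV: "linop P \<Longrightarrow> linV N L n P" by (simp add: linop_def linV_def)
lemma linop_zmul: "linop (zmul j)" by (simp add: linop_def zmul_add zmul_sc)

definition swL :: "nat \<Rightarrow> lbl \<Rightarrow> lbl" where
  "swL i x = (case x of (ex, es, vs) \<Rightarrow> (swp i ex, swp i es, vs))"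

lemma sop_apply: "sop i f (ex, es, vs) = f (swp i ex, swp i es, vs)" by (simp add: sop_def)
lemma sop_add: "sop i (f + g) = sop i f + sop i g" by (rule ext) (auto simp: sop_def)
lemma sop_diff: "sop i (f - g) = sop i f - sop i g" by (rule ext) (auto simp: sop_def)
lemma sop_minus: "sop i (- f) = - sop i f" by (rule ext) (auto simp: sop_def)
lemma sop_sc: "sop i (sc c f) = sc c (sop i f)" by (rule ext) (auto simp: sop_def)
lemma linop_sop: "linop (sop i)" by (simp add: linop_def sop_add sop_sc)

lemma swp_length[simp]: "length (swp i xs) = length xs" by (simp add: swp_def)
lemma swp_swp: "1 \<le> i \<Longrightarrow> i < length xs \<Longrightarrow> swp i (swp i xs) = xs"
  by (rule nth_equalityI) (auto simp: swp_def nth_list_update)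
lemma swp_nth: "1 \<le> i \<Longrightarrow> i < length xs \<Longrightarrow> j < length xs \<Longrightarrow>
   swp i xs ! j = (if j = i - 1 then xs ! i else if j = i then xs ! (i - 1) else xs ! j)"
  by (auto simp: swp_def nth_list_update)
lemma swp_set: "1 \<le> i \<Longrightarrow> i < length xs \<Longrightarrow> set (swp i xs) = set xs"
proof -
  assume a: "1 \<le> i" "i < length xs"
  have "set (swp i xs) \<subseteq> set xs"
  proof
    fix a assume "a \<in> set (swp i xs)"
    then obtain j where "j < length xs" "swp i xs ! j = a" by (auto simp: in_set_conv_nth)
    then show "a \<in> set xs" using a by (auto simp: swp_nth split: if_splits)
  qed
  moreover have "set xs \<subseteq> set (swp i xs)"
  proof
    fix a assume "a \<in> set xs"
    then obtain j where j: "j < length xs" "xs ! j = a" by (auto simp: in_set_conv_nth)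
    show "a \<in> set (swp i xs)"
    proof (cases "j = i - 1 \<or> j = i")
      case True
      then show ?thesis using a j
        by (metis (no_types, lifting) One_nat_def Suc_pred Suc_le_eq le_less_trans less_imp_le_nat nth_mem swp_length swp_nth)
    next
      case False then show ?thesis using a j by (metis nth_mem swp_length swp_nth)
    qed
  qed
  ultimately show ?thesis by blast
qed

lemma wf_lbl_iff: "wf_lbl N L n (ex, es, vs) \<longleftrightarrow> length ex = n \<and> length es = n \<and> length vs = n \<and>
      (\<forall>a\<in>set es. 1 \<le> a \<and> a \<le> L) \<and> (\<forall>b\<in>set vs. 1 \<le> b \<and> b \<le> N)"
  by (simp add: wf_lbl_def)

lemma wf_swL: "1 \<le> i \<Longrightarrow> i < n \<Longrightarrow> wf_lbl N L n x \<Longrightarrow> wf_lbl N L n (swL i x)"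
  by (cases x) (auto simp: swL_def wf_lbl_iff swp_set)

lemma wf_shift: "wf_lbl N L n (shift j x) \<longleftrightarrow> wf_lbl N L n x"
  by (cases x) (auto simp: shift_def wf_lbl_iff)

lemma swL_swL: "1 \<le> i \<Longrightarrow> i < n \<Longrightarrow> wf_lbl N L n x \<Longrightarrow> swL i (swL i x) = x"
  by (cases x) (auto simp: swL_def wf_lbl_iff swp_swp)

lemma swp_eq_iff: "1 \<le> i \<Longrightarrow> i < length ys \<Longrightarrow> (swp i xs = ys) \<longleftrightarrow> (xs = swp i ys)"
proof
  assume a: "1 \<le> i" "i < length ys" and h: "swp i xs = ys"
  then have "length xs = length ys" using swp_length by metis
  then show "xs = swp i ys" using h a swp_swp by metis
next
  assume a: "1 \<le> i" "i < length ys" and h: "xs = swp i ys"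
  then show "swp i xs = ys" using swp_swp by metis
qed

lemma sop_bv: "1 \<le> i \<Longrightarrow> i < n \<Longrightarrow> wf_lbl N L n x \<Longrightarrow> sop i (bv x) = bv (swL i x)"
proof (rule ext)
  fix y :: lbl
  assume a: "1 \<le> i" "i < n" "wf_lbl N L n x"
  obtain ex es vs where y: "y = (ex, es, vs)" by (cases y) auto
  obtain ex' es' vs' where x: "x = (ex', es', vs')" by (cases x) auto
  have l: "length ex' = n" "length es' = n" using a x by (auto simp: wf_lbl_iff)
  have "((swp i ex, swp i es, vs) = x) \<longleftrightarrow> (y = swL i x)"
    using swp_eq_iff[of i ex' ex] swp_eq_iff[of i es' es] a l by (auto simp: x y swL_def)
  then show "sop i (bv x) y = bv (swL i x) y"
    by (simp add: y sop_apply bv_def)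
qed

lemma lower_eq_iff: "(ys[k := ys ! k - 1] = xs) \<longleftrightarrow> (ys = xs[k := xs ! k + (1::int)])"
proof (cases "k < length ys")
  case True
  show ?thesis
  proof
    assume h: "ys[k := ys ! k - 1] = xs"
    then have "length xs = length ys" by auto
    then show "ys = xs[k := xs ! k + 1]" using h True
      by (intro nth_equalityI) (auto simp: nth_list_update)
  next
    assume h: "ys = xs[k := xs ! k + 1]"
    then have "length xs = length ys" by auto
    then show "ys[k := ys ! k - 1] = xs" using h True
      by (intro nth_equalityI) (auto simp: nth_list_update)
  qed
next
  case False
  then show ?thesis by (auto simp: list_update_beyond)
qed

lemma zmul_bv: "zmul j (bv x) = bv (shift j x)"
proof (rule ext)
  fix y :: lbl
  obtain ex es vs where y: "y = (ex, es, vs)" by (cases y) auto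
  obtain ex' es' vs' where x: "x = (ex', es', vs')" by (cases x) auto
  show "zmul j (bv x) y = bv (shift j x) y"
    by (simp add: y x zmul_apply bv_def shift_def lower_eq_iff)
qed

lemma shift_comm: "shift j (shift k x) = shift k (shift j x)"
  by (cases "j - 1 = k - 1"; cases x) (auto simp: shift_def list_update_swap nth_list_update)

lemma swp_up1: "1 \<le> i \<Longrightarrow> i < length ex \<Longrightarrow>
   swp i (ex[i - 1 := ex ! (i - 1) + (1::int)]) = (swp i ex)[i := swp i ex ! i + 1]"
  by (rule nth_equalityI) (simp_all add: swp_nth nth_list_update)
lemma swp_up2: "1 \<le> i \<Longrightarrow> i < length ex \<Longrightarrow>
   swp i (ex[i := ex ! i + (1::int)]) = (swp i ex)[i - 1 := swp i ex ! (i - 1) + 1]"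
  by (rule nth_equalityI) (simp_all add: swp_nth nth_list_update)
lemma swL_shift: "1 \<le> i \<Longrightarrow> wf_lbl N L n x \<Longrightarrow> i < n \<Longrightarrow> swL i (shift i x) = shift (Suc i) (swL i x)"
  using swp_up1 by (cases x) (simp add: swL_def shift_def wf_lbl_iff)
lemma swL_shift2: "1 \<le> i \<Longrightarrow> wf_lbl N L n x \<Longrightarrow> i < n \<Longrightarrow> swL i (shift (Suc i) x) = shift i (swL i x)"
  using swp_up2 by (cases x) (simp add: swL_def shift_def wf_lbl_iff)

lemma zmul_Vn: "f \<in> Vn N L n \<Longrightarrow> zmul j f \<in> Vn N L n"
proof -
  assume f: "f \<in> Vn N L n"
  have fin: "finite (supp f)" and w: "\<And>x. x \<in> supp f \<Longrightarrow> wf_lbl N L n x" using f by (auto simp: Vn_iff)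
  have "zmul j f = zmul j (\<Sum>x\<in>supp f. sc (f x) (bv x))" using decomp fin by metis
  also have "\<dots> = (\<Sum>x\<in>supp f. zmul j (sc (f x) (bv x)))"
    by (rule linV_sum[OF linop_linV[OF linop_zmul]]) (blast intro: Vn_sc Vn_bv w)
  also have "\<dots> = (\<Sum>x\<in>supp f. sc (f x) (bv (shift j x)))" by (simp add: zmul_sc zmul_bv)
  moreover have "(\<Sum>x\<in>supp f. sc (f x) (bv (shift j x))) \<in> Vn N L n"
  proof (rule Vn_sum)
    fix x assume "x \<in> supp f" then show "sc (f x) (bv (shift j x)) \<in> Vn N L n"
      using w by (simp add: Vn_sc Vn_bv wf_shift)
  qed
  ultimately show ?thesis by simp
qed

lemma sop_Vn: "1 \<le> i \<Longrightarrow> i < n \<Longrightarrow> f \<in> Vn N L n \<Longrightarrow> sop i f \<in> Vn N L n"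
proof -
  assume i: "1 \<le> i" "i < n" and f: "f \<in> Vn N L n"
  have fin: "finite (supp f)" and w: "\<And>x. x \<in> supp f \<Longrightarrow> wf_lbl N L n x" using f by (auto simp: Vn_iff)
  have "sop i f = sop i (\<Sum>x\<in>supp f. sc (f x) (bv x))" using decomp fin by metis
  also have "\<dots> = (\<Sum>x\<in>supp f. sop i (sc (f x) (bv x)))"
    by (rule linV_sum[OF linop_linV[OF linop_sop]]) (blast intro: Vn_sc Vn_bv w)
  also have "\<dots> = (\<Sum>x\<in>supp f. sc (f x) (bv (swL i x)))"
  proof (rule sum.cong)
    fix x assume "x \<in> supp f"
    then show "sop i (sc (f x) (bv x)) = sc (f x) (bv (swL i x))" using sop_bv[OF i w] by (simp add: sop_sc)
  qed simp
  moreover have "(\<Sum>x\<in>supp f. sc (f x) (bv (swL i x))) \<in> Vn N L n"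
  proof (rule Vn_sum)
    fix x assume "x \<in> supp f" then show "sc (f x) (bv (swL i x)) \<in> Vn N L n"
      using w i by (simp add: Vn_sc Vn_bv wf_swL)
  qed
  ultimately show ?thesis by simp
qed


lemma sop_zmul1: "1 \<le> i \<Longrightarrow> i < n \<Longrightarrow> f \<in> Vn N L n \<Longrightarrow> sop i (zmul i f) = zmul (Suc i) (sop i f)"
  apply (rule linV_basis_eq[of N L n "\<lambda>f. sop i (zmul i f)" "\<lambda>f. zmul (Suc i) (sop i f)"])
  apply (simp add: linV_def zmul_add zmul_sc sop_add sop_sc)
  apply (simp add: linV_def zmul_add zmul_sc sop_add sop_sc)
  apply (simp add: zmul_bv sop_bv wf_shift swL_shift wf_swL)
  by simp

lemma sop_zmul2: "1 \<le> i \<Longrightarrow> i < n \<Longrightarrow> f \<in> Vn N L n \<Longrightarrow> sop i (zmul (Suc i) f) = zmul i (sop i f)"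
  apply (rule linV_basis_eq[of N L n "\<lambda>f. sop i (zmul (Suc i) f)" "\<lambda>f. zmul i (sop i f)"])
  apply (simp add: linV_def zmul_add zmul_sc sop_add sop_sc)
  apply (simp add: linV_def zmul_add zmul_sc sop_add sop_sc)
  apply (simp add: zmul_bv sop_bv wf_shift swL_shift2 wf_swL)
  by simp

definition swE :: "nat \<Rightarrow> lbl \<Rightarrow> lbl" where
  "swE i x = (case x of (ex, es, vs) \<Rightarrow> (ex, swp i es, vs))"

definition RF :: "nat \<Rightarrow> nat \<Rightarrow> lbl \<Rightarrow> vec" where
  "RF N i x = (let q = qpar N; X = bv x; a = (fst (snd x)) ! (i - 1); b = (fst (snd x)) ! i in
      if a = b then sc (q ^ 2) (zmul i X) - zmul (Suc i) X
      else sc q (zmul i X - zmul (Suc i) X)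
           + sc (q ^ 2 - 1) (zmul (if b < a then i else Suc i) (bv (swE i x))))"

lemma Rop_bv: "Rop N i (bv x) = RF N i x"
proof -
  obtain ex es vs where x: "x = (ex, es, vs)" by (cases x) auto
  show ?thesis unfolding Rop_def lin_bv RF_def x
    by (simp only: prod.case Let_def zmul_bv swE_def fst_conv snd_conv)
qed

lemma wf_swE: "1 \<le> i \<Longrightarrow> i < n \<Longrightarrow> wf_lbl N L n x \<Longrightarrow> wf_lbl N L n (swE i x)"
  by (cases x) (auto simp: swE_def wf_lbl_iff swp_set)

lemma Rop_Vn: "1 \<le> i \<Longrightarrow> i < n \<Longrightarrow> f \<in> Vn N L n \<Longrightarrow> Rop N i f \<in> Vn N L n"
proof -
  assume a: "1 \<le> i" "i < n" "f \<in> Vn N L n"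
  have "lin (\<lambda>x. Rop N i (bv x)) f \<in> Vn N L n"
  proof (rule lin_Vn[OF a(3)])
    fix x assume w: "wf_lbl N L n x"
    have b1: "bv x \<in> Vn N L n" "bv (swE i x) \<in> Vn N L n" using w wf_swE[OF a(1,2) w] by auto
    show "Rop N i (bv x) \<in> Vn N L n" unfolding Rop_bv RF_def Let_def
      using b1 by (auto intro!: Vn_add Vn_diff Vn_sc zmul_Vn)
  qed
  moreover have "(\<lambda>x. Rop N i (bv x)) = (\<lambda>x. case x of (ex, es, vs) \<Rightarrow>
     (let q = qpar N; a = es ! (i - 1); b = es ! i; y = (ex, swp i es, vs) in
      if a = b then sc (q ^ 2) (bv (shift i x)) - bv (shift (Suc i) x)
      else sc q (bv (shift i x) - bv (shift (Suc i) x))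
           + sc (q ^ 2 - 1) (bv (shift (if b < a then i else Suc i) y))))"
    unfolding Rop_def lin_bv by simp
  ultimately show ?thesis unfolding Rop_def by simp
qed

lemma linV_Rop: "linV N L n (Rop N i)" unfolding Rop_def by (rule linV_lin)

lemma shift_fst_snd[simp]: "fst (snd (shift j x)) = fst (snd x)"
  by (cases x) (simp add: shift_def)
lemma swE_shift: "swE i (shift j x) = shift j (swE i x)"
  by (cases x) (simp add: shift_def swE_def)

lemma Rop_zmul: "f \<in> Vn N L n \<Longrightarrow> Rop N i (zmul j f) = zmul j (Rop N i f)"
  apply (rule linV_basis_eq[of N L n "\<lambda>f. Rop N i (zmul j f)" "\<lambda>f. zmul j (Rop N i f)"])
  using linV_Rop[of N L n i] zmul_Vn[of _ N L n j]
  apply (simp add: linV_def zmul_add zmul_sc)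
  using linV_Rop[of N L n i] zmul_Vn[of _ N L n j]
  apply (simp add: linV_def zmul_add zmul_sc)
  apply (simp only: zmul_bv[symmetric] Rop_bv)
  apply (simp only: zmul_bv Rop_bv)
  apply (simp only: RF_def Let_def shift_fst_snd swE_shift)
  apply (simp only: zmul_bv[symmetric] zmul_add zmul_diff zmul_sc sc_add sc_diff)
  apply (simp add: zmul_comm zmul_add zmul_diff zmul_sc)
  by simp

definition Eq :: "nat \<Rightarrow> nat \<Rightarrow> vec \<Rightarrow> vec \<Rightarrow> bool" where
  "Eq N i f h = (Z1 i (Z2 N i (h + f)) = Z3 N i (Z2 N i f - sop i (Rop N i f)))"

lemma Tcop_alt: "Tcop N L n i f = (THE h. h \<in> Vn N L n \<and> Eq N i f h)"
  by (simp add: Tcop_def Eq_def Z1_def Z2_def Z3_def Let_def)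

definition kap :: "kf \<Rightarrow> vec" where "kap c = (\<lambda>_. c)"
lemma sc_kap: "sc c f = kap c * f" by (rule ext) (simp add: kap_def)
lemma kap_mult: "kap (a * b) = kap a * kap b" by (rule ext) (simp add: kap_def)
lemma kap_add: "kap (a + b) = kap a + kap b" by (rule ext) (simp add: kap_def)
lemma kap_diff: "kap (a - b) = kap a - kap b" by (rule ext) (simp add: kap_def)
lemma kap_minus: "kap (- a) = - kap a" by (rule ext) (simp add: kap_def)
lemma kap_one: "kap 1 = 1" by (rule ext) (simp add: kap_def)
lemma kap_zero: "kap 0 = 0" by (rule ext) (simp add: kap_def)
lemma kap_power: "kap (a ^ k) = kap a ^ k" by (induction k) (simp_all add: kap_one kap_mult)
lemma kap_inverse_mult: "a \<noteq> 0 \<Longrightarrow> kap (inverse a) * kap a = 1" by (rule ext) (simp add: kap_def)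
lemmas kap_simps = sc_kap kap_mult kap_add kap_diff kap_minus kap_one kap_zero kap_power

lemma zmul_kap: "zmul j (kap c * f) = kap c * zmul j f"
  by (rule ext) (simp add: zmul_def kap_def split: prod.splits)

lemma raise1_id1: "Z1 i (Z2 N i (zmul (Suc i) h + sc (1 - qpar N ^ 2) (zmul (Suc i) f) + zmul i f))
   = zmul (Suc i) (Z1 i (Z2 N i (h + f))) + Z1 i (Z2 N i (Z3 N i f))"
  unfolding Z1_def Z2_def Z3_def
  by (simp only: zsimps) (simp add: kap_simps zmul_kap zmul_comm algebra_simps)

lemma raise1_id2: "Z3 N i (Z2 N i (zmul i f) - zmul (Suc i) S)
   = zmul (Suc i) (Z3 N i (Z2 N i f - S)) + Z1 i (Z2 N i (Z3 N i f))"
  unfolding Z1_def Z2_def Z3_def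
  by (simp only: zsimps) (simp add: kap_simps zmul_kap zmul_comm algebra_simps)

lemma raise1:
  assumes i: "1 \<le> i" "i < n" and f: "f \<in> Vn N L n" and E: "Eq N i f h"
  shows "Eq N i (zmul i f) (zmul (Suc i) h + sc (1 - qpar N ^ 2) (zmul (Suc i) f))"
proof -
  have R: "Rop N i (zmul i f) = zmul i (Rop N i f)" using Rop_zmul f by blast
  have S: "sop i (zmul i (Rop N i f)) = zmul (Suc i) (sop i (Rop N i f))"
    using sop_zmul1[OF i Rop_Vn[OF i f]] .
  have hB: "zmul (Suc i) (Z1 i (Z2 N i (h + f))) = zmul (Suc i) (Z3 N i (Z2 N i f - sop i (Rop N i f)))"
    using E unfolding Eq_def by simp
  show ?thesis unfolding Eq_def R S raise1_id1 raise1_id2 hB ..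
qed

lemma raise2_id1: "Z1 i (Z2 N i (zmul i h + sc (qpar N ^ 2 - 1) (zmul (Suc i) f) + zmul (Suc i) f))
   = zmul i (Z1 i (Z2 N i (h + f))) + Z1 i (Z2 N i (Z2 N i f))"
  unfolding Z1_def Z2_def Z3_def
  by (simp only: zsimps) (simp add: kap_simps zmul_kap zmul_comm algebra_simps)

lemma raise2_id2: "Z3 N i (Z2 N i (zmul (Suc i) f) - zmul i S)
   = zmul i (Z3 N i (Z2 N i f - S)) + Z1 i (Z2 N i (Z2 N i f))"
  unfolding Z1_def Z2_def Z3_def
  by (simp only: zsimps) (simp add: kap_simps zmul_kap zmul_comm algebra_simps)

lemma raise2:
  assumes i: "1 \<le> i" "i < n" and f: "f \<in> Vn N L n" and E: "Eq N i f h"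
  shows "Eq N i (zmul (Suc i) f) (zmul i h + sc (qpar N ^ 2 - 1) (zmul (Suc i) f))"
proof -
  have R: "Rop N i (zmul (Suc i) f) = zmul (Suc i) (Rop N i f)" using Rop_zmul f by blast
  have S: "sop i (zmul (Suc i) (Rop N i f)) = zmul i (sop i (Rop N i f))"
    using sop_zmul2[OF i Rop_Vn[OF i f]] .
  have hA: "zmul i (Z1 i (Z2 N i (h + f))) = zmul i (Z3 N i (Z2 N i f - sop i (Rop N i f)))"
    using E unfolding Eq_def by simp
  show ?thesis unfolding Eq_def R S raise2_id1 raise2_id2 hA ..
qed

lemma linV_RopD: "f \<in> Vn N L n \<Longrightarrow> g \<in> Vn N L n \<Longrightarrow> Rop N i (f + g) = Rop N i f + Rop N i g"
  using linV_Rop unfolding linV_def by blast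
lemma linV_RopS: "f \<in> Vn N L n \<Longrightarrow> Rop N i (sc c f) = sc c (Rop N i f)"
  using linV_Rop[of N L n i] Vn_zero unfolding linV_def by blast

lemma Eq_add: "f \<in> Vn N L n \<Longrightarrow> g \<in> Vn N L n \<Longrightarrow> Eq N i f h \<Longrightarrow> Eq N i g k \<Longrightarrow> Eq N i (f + g) (h + k)"
proof -
  assume fg: "f \<in> Vn N L n" "g \<in> Vn N L n" and E: "Eq N i f h" "Eq N i g k"
  have e1: "Z1 i (Z2 N i (h + f)) = Z3 N i (Z2 N i f - sop i (Rop N i f))"
   and e2: "Z1 i (Z2 N i (k + g)) = Z3 N i (Z2 N i g - sop i (Rop N i g))" using E by (auto simp: Eq_def)
  have "Z1 i (Z2 N i (h + k + (f + g))) = Z1 i (Z2 N i (h + f)) + Z1 i (Z2 N i (k + g))"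
    unfolding Z1_def Z2_def by (simp only: zsimps) (simp add: algebra_simps)
  also have "\<dots> = Z3 N i (Z2 N i f - sop i (Rop N i f)) + Z3 N i (Z2 N i g - sop i (Rop N i g))"
    using e1 e2 by simp
  also have "\<dots> = Z3 N i (Z2 N i (f + g) - sop i (Rop N i (f + g)))"
    unfolding linV_RopD[OF fg] sop_add Z3_def Z2_def by (simp only: zsimps) (simp add: algebra_simps)
  finally show ?thesis unfolding Eq_def .
qed

lemma Eq_sc: "f \<in> Vn N L n \<Longrightarrow> Eq N i f h \<Longrightarrow> Eq N i (sc c f) (sc c h)"
proof -
  assume f: "f \<in> Vn N L n" and E: "Eq N i f h"
  have e1: "Z1 i (Z2 N i (h + f)) = Z3 N i (Z2 N i f - sop i (Rop N i f))" using E by (auto simp: Eq_def)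
  have "Z1 i (Z2 N i (sc c h + sc c f)) = sc c (Z1 i (Z2 N i (h + f)))"
    unfolding Z1_def Z2_def by (simp only: zsimps) (simp add: kap_simps zmul_kap algebra_simps)
  also have "\<dots> = sc c (Z3 N i (Z2 N i f - sop i (Rop N i f)))" using e1 by simp
  also have "\<dots> = Z3 N i (Z2 N i (sc c f) - sop i (Rop N i (sc c f)))"
    unfolding linV_RopS[OF f] sop_sc Z3_def Z2_def by (simp only: zsimps) (simp add: kap_simps zmul_kap algebra_simps)
  finally show ?thesis unfolding Eq_def .
qed

lemma zmul_inj:
  assumes i: "1 \<le> i" "i < n" and g: "g \<in> Vn N L n" and al: "\<alpha> \<noteq> 0"
    and e: "sc \<alpha> (zmul i g) = sc \<beta> (zmul (Suc i) g)"
  shows "g = 0"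
proof (rule ccontr)
  assume "g \<noteq> 0"
  then have ne: "supp g \<noteq> {}" by (auto simp: supp_def)
  have fin: "finite (supp g)" and w: "\<And>x. x \<in> supp g \<Longrightarrow> wf_lbl N L n x" using g by (auto simp: Vn_iff)
  define \<phi> where "\<phi> = (\<lambda>x::lbl. fst x ! (i - 1))"
  define m where "m = Max (\<phi> ` supp g)"
  have "m \<in> \<phi> ` supp g" unfolding m_def using fin ne by (intro Max_in) auto
  then obtain x where x: "x \<in> supp g" "\<phi> x = m" by auto
  have mx: "\<And>z. z \<in> supp g \<Longrightarrow> \<phi> z \<le> m" unfolding m_def using fin by auto
  obtain ex es vs where xe: "x = (ex, es, vs)" by (cases x) auto
  have len: "length ex = n" using w[OF x(1)] xe by (simp add: wf_lbl_iff)
  define ey where "ey = ex[i - 1 := ex ! (i - 1) + 1]"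
  have l1: "ey[i - 1 := ey ! (i - 1) - 1] = ex" unfolding ey_def using len i by (simp add: lower_eq_iff)
  define z where "z = (ey[Suc i - 1 := ey ! (Suc i - 1) - 1], es, vs)"
  have "\<phi> z = m + 1" unfolding z_def \<phi>_def ey_def using len i x(2) xe \<phi>_def
    by (simp add: nth_list_update)
  then have "z \<notin> supp g" using mx by fastforce
  then have gz: "g z = 0" by (simp add: supp_def)
  have "sc \<alpha> (zmul i g) (ey, es, vs) = sc \<beta> (zmul (Suc i) g) (ey, es, vs)" using e by simp
  then have "\<alpha> * g x = \<beta> * g z" unfolding sc_apply zmul_apply l1 z_def xe by simp
  then have "g x = 0" using gz al by simp
  then show False using x(1) by (simp add: supp_def)
qed

lemma Z2_Vn: "f \<in> Vn N L n \<Longrightarrow> Z2 N i f \<in> Vn N L n"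
  unfolding Z2_def by (intro Vn_diff Vn_sc zmul_Vn)

lemma Eq_unique:
  assumes i: "1 \<le> i" "i < n" and h: "h1 \<in> Vn N L n" "h2 \<in> Vn N L n"
    and E: "Eq N i f h1" "Eq N i f h2"
  shows "h1 = h2"
proof -
  define d where "d = h1 - h2"
  have d: "d \<in> Vn N L n" unfolding d_def using h by blast
  have "Z1 i (Z2 N i (h1 + f)) = Z1 i (Z2 N i (h2 + f))" using E by (simp add: Eq_def)
  moreover have "Z1 i (Z2 N i (h1 + f)) - Z1 i (Z2 N i (h2 + f)) = Z1 i (Z2 N i d)"
    unfolding Z1_def Z2_def d_def by (simp only: zsimps) (simp add: algebra_simps)
  ultimately have "Z1 i (Z2 N i d) = 0" by simp
  then have "sc 1 (zmul i (Z2 N i d)) = sc 1 (zmul (Suc i) (Z2 N i d))" unfolding Z1_def by simp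
  moreover have z2: "Z2 N i d \<in> Vn N L n" by (rule Z2_Vn[OF d])
  ultimately have "Z2 N i d = 0" using zmul_inj[OF i z2, where \<alpha>=1 and \<beta>=1] by simp
  then have "sc 1 (zmul i d) = sc (qpar N ^ 2) (zmul (Suc i) d)" unfolding Z2_def by simp
  then have "d = 0" using zmul_inj[OF i d, where \<alpha>=1 and \<beta>="qpar N ^ 2"] by simp
  then show ?thesis unfolding d_def by simp
qed

lemma Tcop_eqI: "1 \<le> i \<Longrightarrow> i < n \<Longrightarrow> h \<in> Vn N L n \<Longrightarrow> Eq N i f h \<Longrightarrow> Tcop N L n i f = h"
  unfolding Tcop_alt by (rule the_equality) (auto intro: Eq_unique)

lemma swp_same: "1 \<le> i \<Longrightarrow> i < length xs \<Longrightarrow> xs ! (i - 1) = xs ! i \<Longrightarrow> swp i xs = xs"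
  by (rule nth_equalityI) (auto simp: swp_nth)

definition hb :: "nat \<Rightarrow> nat \<Rightarrow> lbl \<Rightarrow> vec" where
  "hb N i x = (let X = bv x; Xs = bv (swE i x); q = qpar N; a = fst (snd x) ! (i - 1); b = fst (snd x) ! i in
     if a = b then - X else if a < b then sc (q ^ 2 - 1) X - sc q Xs else - sc q Xs)"

lemma base_Eq:
  assumes i: "1 \<le> i" "i < n" and w: "wf_lbl N L n x" and eq: "fst x ! (i - 1) = fst x ! i"
  shows "Eq N i (bv x) (hb N i x)"
proof -
  obtain ex es vs where xe: "x = (ex, es, vs)" by (cases x) auto
  have len: "length ex = n" "length es = n" using w xe by (auto simp: wf_lbl_iff)
  have sLE: "swL i x = swE i x" using swp_same[of i ex] eq len i by (simp add: xe swL_def swE_def)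
  have ws: "wf_lbl N L n (swE i x)" using wf_swE[OF i w] .
  have sX: "sop i (bv x) = bv (swE i x)" using sop_bv[OF i w] sLE by simp
  have exs: "swp i ex = ex" using swp_same[of i ex] eq len i by (simp add: xe)
  have sXs: "sop i (bv (swE i x)) = bv x"
    using sop_bv[OF i ws] swp_swp[of i es] len i exs by (simp add: xe swL_def swE_def)
  have X: "bv x \<in> Vn N L n" "bv (swE i x) \<in> Vn N L n" using w ws by auto
  note s1 = sop_zmul1[OF i X(1)] sop_zmul1[OF i X(2)] sop_zmul2[OF i X(1)] sop_zmul2[OF i X(2)]
  show ?thesis
  proof (cases "es ! (i - 1) = es ! i")
    case True
    have xs: "swE i x = x" using swp_same[of i es] True len i by (simp add: xe swE_def)
    have R: "sop i (Rop N i (bv x)) = sc (qpar N ^ 2) (zmul (Suc i) (bv x)) - zmul i (bv x)"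
      unfolding Rop_bv RF_def Let_def using True
      by (simp add: xe sop_add sop_diff sop_sc s1[unfolded xe] sX[unfolded xe xs] xs[unfolded xe] del: One_nat_def)
    have H: "hb N i x = - bv x" using True by (simp add: hb_def xe Let_def)
    show ?thesis unfolding Eq_def R H Z1_def Z2_def Z3_def
      by (simp only: zsimps) (simp add: kap_simps zmul_kap zmul_comm algebra_simps)
  next
    case False
    then consider "es ! (i - 1) < es ! i" | "es ! i < es ! (i - 1)" by linarith
    then show ?thesis
    proof cases
      case 1
      have R: "sop i (Rop N i (bv x)) = sc (qpar N) (zmul (Suc i) (bv (swE i x)) - zmul i (bv (swE i x)))
           + sc (qpar N ^ 2 - 1) (zmul i (bv x))"
        unfolding Rop_bv RF_def Let_def using 1
        by (simp add: xe sop_add sop_diff sop_sc s1[unfolded xe] sX[unfolded xe] sXs[unfolded xe] del: One_nat_def)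
      have H: "hb N i x = sc (qpar N ^ 2 - 1) (bv x) - sc (qpar N) (bv (swE i x))" using 1 by (simp add: hb_def xe Let_def)
      show ?thesis unfolding Eq_def R H Z1_def Z2_def Z3_def
        by (simp only: zsimps) (simp add: kap_simps zmul_kap zmul_comm algebra_simps)
    next
      case 2
      have R: "sop i (Rop N i (bv x)) = sc (qpar N) (zmul (Suc i) (bv (swE i x)) - zmul i (bv (swE i x)))
           + sc (qpar N ^ 2 - 1) (zmul (Suc i) (bv x))"
        unfolding Rop_bv RF_def Let_def using 2
        by (simp add: xe sop_add sop_diff sop_sc s1[unfolded xe] sX[unfolded xe] sXs[unfolded xe] del: One_nat_def)
      have H: "hb N i x = - sc (qpar N) (bv (swE i x))" using 2 by (simp add: hb_def xe Let_def)
      show ?thesis unfolding Eq_def R H Z1_def Z2_def Z3_def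
        by (simp only: zsimps) (simp add: kap_simps zmul_kap zmul_comm algebra_simps)
    qed
  qed
qed

definition lowerL :: "nat \<Rightarrow> lbl \<Rightarrow> lbl" where
  "lowerL j y = (case y of (ex, es, vs) \<Rightarrow> (ex[j - 1 := ex ! (j - 1) - 1], es, vs))"

lemma zmul_lowerL: "zmul j g y = g (lowerL j y)"
  by (cases y) (simp add: zmul_def lowerL_def)

lemma shift_lowerL: "shift j (lowerL j y) = y"
proof -
  obtain ex es vs where y: "y = (ex, es, vs)" by (cases y) auto
  have "(ex[j - 1 := ex ! (j - 1) - 1])[j - 1 := (ex[j - 1 := ex ! (j - 1) - 1]) ! (j - 1) + 1] = ex"
    by (cases "j - 1 < length ex") (auto simp: list_update_beyond)
  then show ?thesis by (simp add: y shift_def lowerL_def)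
qed

lemma supp_zmul: "y \<in> supp (zmul j g) \<Longrightarrow> \<exists>z\<in>supp g. y = shift j z"
proof -
  assume "y \<in> supp (zmul j g)"
  then have "lowerL j y \<in> supp g" by (simp add: supp_def zmul_lowerL)
  then show ?thesis using shift_lowerL[of j y] by metis
qed

definition inbox :: "nat \<Rightarrow> nat \<Rightarrow> nat \<Rightarrow> nat \<Rightarrow> lbl \<Rightarrow> lbl \<Rightarrow> bool" where
  "inbox N L n i x y = (wf_lbl N L n y \<and> snd (snd y) = snd (snd x) \<and>
     (\<forall>j<n. j \<noteq> i - 1 \<and> j \<noteq> i \<longrightarrow> fst y ! j = fst x ! j \<and> fst (snd y) ! j = fst (snd x) ! j) \<and>
     fst y ! (i - 1) + fst y ! i = fst x ! (i - 1) + fst x ! i \<and>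
     min (fst x ! (i - 1)) (fst x ! i) \<le> fst y ! (i - 1) \<and>
     fst y ! (i - 1) \<le> max (fst x ! (i - 1)) (fst x ! i) \<and>
     (fst x ! i < fst x ! (i - 1) \<longrightarrow> fst y ! (i - 1) < fst x ! (i - 1)))"

lemma inbox_refl: "wf_lbl N L n x \<Longrightarrow> fst x ! (i - 1) \<le> fst x ! i \<Longrightarrow> inbox N L n i x x"
  by (simp add: inbox_def)

lemma inbox_swE: "1 \<le> i \<Longrightarrow> i < n \<Longrightarrow> wf_lbl N L n x \<Longrightarrow> fst x ! (i - 1) = fst x ! i \<Longrightarrow> inbox N L n i x (swE i x)"
  using wf_swE[of i n N L x]
  by (cases x) (auto simp: inbox_def swE_def swp_nth wf_lbl_iff)

lemma hb_Vn: "1 \<le> i \<Longrightarrow> i < n \<Longrightarrow> wf_lbl N L n x \<Longrightarrow> hb N i x \<in> Vn N L n"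
  using wf_swE[of i n N L x] by (auto simp: hb_def Let_def intro!: Vn_diff Vn_sc Vn_bv Vn_uminus)

lemma hb_supp: "y \<in> supp (hb N i x) \<Longrightarrow> y = x \<or> y = swE i x"
  by (auto simp: hb_def Let_def supp_def bv_def split: if_splits)

lemma T_exists_box:
  assumes i: "1 \<le> i" "i < n"
  shows "wf_lbl N L n x \<Longrightarrow> \<exists>h\<in>Vn N L n. Eq N i (bv x) h \<and> (\<forall>y\<in>supp h. inbox N L n i x y)"
proof (induction "nat \<bar>fst x ! (i - 1) - fst x ! i\<bar>" arbitrary: x rule: less_induct)
  case less
  obtain ex es vs where xe: "x = (ex, es, vs)" by (cases x) auto
  have len: "length ex = n" using less.prems xe by (simp add: wf_lbl_iff)
  define a where "a = ex ! (i - 1)"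
  define b where "b = ex ! i"
  have i1: "i - 1 < n" "i - 1 \<noteq> i" using i by auto
  consider "a = b" | "b < a" | "a < b" by linarith
  then show ?case
  proof cases
    case 1
    then show ?thesis
      using base_Eq[OF i less.prems] hb_Vn[OF i less.prems] hb_supp[of _ N i x]
        inbox_refl[OF less.prems] inbox_swE[OF i less.prems]
      by (simp add: xe a_def b_def) (metis order_refl)
  next
    case 2
    define x' where "x' = (ex[i - 1 := a - 1], es, vs)"
    have w': "wf_lbl N L n x'" using less.prems by (simp add: x'_def xe wf_lbl_iff)
    have sx: "shift i x' = x" unfolding x'_def xe shift_def a_def using len i1
      by (simp add: nth_list_update)
    have x'a: "fst x' ! (i - 1) = a - 1" "fst x' ! i = b" using len i1 by (simp_all add: x'_def b_def nth_list_update)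
    have lt: "nat \<bar>fst x' ! (i - 1) - fst x' ! i\<bar> < nat \<bar>fst x ! (i - 1) - fst x ! i\<bar>"
      using 2 x'a by (simp add: xe a_def b_def)
    obtain h' where h': "h' \<in> Vn N L n" "Eq N i (bv x') h'" "\<forall>y\<in>supp h'. inbox N L n i x' y"
      using less.hyps[OF lt w'] by blast
    define h where "h = zmul (Suc i) h' + sc (1 - qpar N ^ 2) (zmul (Suc i) (bv x'))"
    have E: "Eq N i (bv x) h" unfolding h_def using raise1[OF i Vn_bv[OF w'] h'(2)] sx zmul_bv by metis
    have hV: "h \<in> Vn N L n" unfolding h_def using h'(1) w' by (intro Vn_add Vn_sc zmul_Vn Vn_bv)
    have box: "\<forall>y\<in>supp h. inbox N L n i x y"
    proof
      fix y assume y: "y \<in> supp h"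
      then have "y \<in> supp (zmul (Suc i) h') \<or> y \<in> supp (zmul (Suc i) (bv x'))"
        unfolding h_def using supp_add supp_sc by blast
      then obtain z where z: "y = shift (Suc i) z" "z = x' \<or> inbox N L n i x' z"
        using supp_zmul h'(3) supp_bv by (metis singletonD)
      have zw: "wf_lbl N L n z" using z(2) w' by (auto simp: inbox_def)
      obtain ez esz vsz where ze: "z = (ez, esz, vsz)" by (cases z) auto
      have lz: "length ez = n" using zw ze by (simp add: wf_lbl_iff)
      have zc: "\<forall>j<n. j \<noteq> i - 1 \<and> j \<noteq> i \<longrightarrow> ez ! j = ex ! j \<and> esz ! j = es ! j"
        "vsz = vs" "ez ! (i - 1) + ez ! i = a - 1 + b" "b \<le> ez ! (i - 1)" "ez ! (i - 1) \<le> a - 1"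
        using z(2) 2 len i1 i by (auto simp: inbox_def x'_def ze nth_list_update b_def)
      have wy: "wf_lbl N L n (ez[i := ez ! i + 1], esz, vsz)"
        using wf_shift[of N L n "Suc i" z] zw ze by (simp add: shift_def)
      have a': "ex ! (i - Suc 0) = a" "ex ! i = b" using a_def b_def by simp_all
      show "inbox N L n i x y"
        unfolding inbox_def z(1) ze shift_def using zc wy lz i1 2 len a' i
        by (auto simp: xe nth_list_update)
    qed
    show ?thesis using E hV box by blast
  next
    case 3
    define x' where "x' = (ex[i := b - 1], es, vs)"
    have w': "wf_lbl N L n x'" using less.prems by (simp add: x'_def xe wf_lbl_iff)
    have sx: "shift (Suc i) x' = x" unfolding x'_def xe shift_def b_def using len i1 i
      by (simp add: nth_list_update)
    have x'a: "fst x' ! (i - 1) = a" "fst x' ! i = b - 1" using len i1 i by (simp_all add: x'_def a_def nth_list_update)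
    have lt: "nat \<bar>fst x' ! (i - 1) - fst x' ! i\<bar> < nat \<bar>fst x ! (i - 1) - fst x ! i\<bar>"
      using 3 x'a by (simp add: xe a_def b_def)
    obtain h' where h': "h' \<in> Vn N L n" "Eq N i (bv x') h'" "\<forall>y\<in>supp h'. inbox N L n i x' y"
      using less.hyps[OF lt w'] by blast
    define h where "h = zmul i h' + sc (qpar N ^ 2 - 1) (zmul (Suc i) (bv x'))"
    have E: "Eq N i (bv x) h" unfolding h_def using raise2[OF i Vn_bv[OF w'] h'(2)] sx zmul_bv by metis
    have hV: "h \<in> Vn N L n" unfolding h_def using h'(1) w' by (intro Vn_add Vn_sc zmul_Vn Vn_bv)
    have box: "\<forall>y\<in>supp h. inbox N L n i x y"
    proof
      fix y assume y: "y \<in> supp h"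
      then have "y \<in> supp (zmul i h') \<or> y \<in> supp (zmul (Suc i) (bv x'))"
        unfolding h_def using supp_add supp_sc by blast
      then show "inbox N L n i x y"
      proof
        assume "y \<in> supp (zmul (Suc i) (bv x'))"
        then have "y = x" using sx zmul_bv supp_bv by (metis singletonD)
        then show ?thesis using inbox_refl[OF less.prems] 3 by (simp add: xe a_def b_def)
      next
        assume "y \<in> supp (zmul i h')"
        then obtain z where z: "y = shift i z" "inbox N L n i x' z"
          using supp_zmul h'(3) by metis
        have zw: "wf_lbl N L n z" using z(2) by (auto simp: inbox_def)
        obtain ez esz vsz where ze: "z = (ez, esz, vsz)" by (cases z) auto
        have lz: "length ez = n" using zw ze by (simp add: wf_lbl_iff)
        have zc: "\<forall>j<n. j \<noteq> i - 1 \<and> j \<noteq> i \<longrightarrow> ez ! j = ex ! j \<and> esz ! j = es ! j"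
          "vsz = vs" "ez ! (i - 1) + ez ! i = a + (b - 1)" "a \<le> ez ! (i - 1)" "ez ! (i - 1) \<le> b - 1"
          using z(2) 3 len i1 i by (auto simp: inbox_def x'_def ze nth_list_update a_def)
        have wy: "wf_lbl N L n (ez[i - 1 := ez ! (i - 1) + 1], esz, vsz)"
          using wf_shift[of N L n i z] zw ze by (simp add: shift_def)
        have a': "ex ! (i - Suc 0) = a" "ex ! i = b" using a_def b_def by simp_all
        show "inbox N L n i x y"
          unfolding inbox_def z(1) ze shift_def using zc wy lz i1 3 len a' i
          by (auto simp: xe nth_list_update)
      qed
    qed
    show ?thesis using E hV box by blast
  qed
qed


lemma kap_numeral[simp]: "kap (numeral k) = numeral k"
  by (simp add: kap_def numeral_fun)

lemma Rop_zero: "Rop N i 0 = 0" by (rule ext) (simp add: Rop_def lin_def)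
lemma sop_zero: "sop i 0 = 0" by (rule ext) (simp add: sop_def split: prod.splits)

lemma Eq_zero: "Eq N i 0 0"
  by (simp add: Eq_def Rop_zero sop_zero Z1_def Z2_def Z3_def)

lemma Eq_sum: "(\<And>x. x \<in> A \<Longrightarrow> g x \<in> Vn N L n \<and> Eq N i (g x) (k x)) \<Longrightarrow>
    Eq N i (\<Sum>x\<in>A. g x) (\<Sum>x\<in>A. k x)"
proof (induction A rule: infinite_finite_induct)
  case (infinite A) then show ?case using Eq_zero by (metis sum.infinite)
next
  case empty then show ?case using Eq_zero by (metis sum.empty)
next
  case (insert x F)
  have "Eq N i (g x + (\<Sum>x\<in>F. g x)) (k x + (\<Sum>x\<in>F. k x))"
    using insert by (intro Eq_add) (auto intro!: Vn_sum)
  moreover have "sum g (insert x F) = g x + sum g F" "sum k (insert x F) = k x + sum k F"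
    using sum.insert[OF insert.hyps(1,2)] by blast+
  ultimately show ?case by metis
qed

context
  fixes N L n i :: nat assumes i: "1 \<le> i" "i < n"
begin

lemma T_bv: "wf_lbl N L n x \<Longrightarrow> Tcop N L n i (bv x) \<in> Vn N L n \<and> Eq N i (bv x) (Tcop N L n i (bv x))
   \<and> (\<forall>y\<in>supp (Tcop N L n i (bv x)). inbox N L n i x y)"
proof -
  assume w: "wf_lbl N L n x"
  obtain h where h: "h \<in> Vn N L n" "Eq N i (bv x) h" "\<forall>y\<in>supp h. inbox N L n i x y"
    using T_exists_box[OF i w] by blast
  show ?thesis using Tcop_eqI[OF i h(1,2)] h by simp
qed

lemma T_Vn_Eq: "f \<in> Vn N L n \<Longrightarrow> Tcop N L n i f \<in> Vn N L n \<and> Eq N i f (Tcop N L n i f)"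
proof -
  assume f: "f \<in> Vn N L n"
  have fin: "finite (supp f)" and w: "\<And>x. x \<in> supp f \<Longrightarrow> wf_lbl N L n x" using f by (auto simp: Vn_iff)
  define h where "h = (\<Sum>x\<in>supp f. sc (f x) (Tcop N L n i (bv x)))"
  have hV: "h \<in> Vn N L n" unfolding h_def using T_bv w by (intro Vn_sum Vn_sc) blast
  have "Eq N i (\<Sum>x\<in>supp f. sc (f x) (bv x)) h" unfolding h_def
    using T_bv w by (intro Eq_sum) (blast intro: Eq_sc Vn_sc Vn_bv)
  then have E: "Eq N i f h" using decomp[OF fin] by metis
  show ?thesis using Tcop_eqI[OF i hV E] hV E by simp
qed

lemma T_Vn: "f \<in> Vn N L n \<Longrightarrow> Tcop N L n i f \<in> Vn N L n" using T_Vn_Eq by blast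

lemma T_add: "f \<in> Vn N L n \<Longrightarrow> g \<in> Vn N L n \<Longrightarrow> Tcop N L n i (f + g) = Tcop N L n i f + Tcop N L n i g"
proof -
  assume a: "f \<in> Vn N L n" "g \<in> Vn N L n"
  have E: "Eq N i (f + g) (Tcop N L n i f + Tcop N L n i g)" using Eq_add[OF a] T_Vn_Eq[OF a(1)] T_Vn_Eq[OF a(2)] by blast
  have V: "Tcop N L n i f + Tcop N L n i g \<in> Vn N L n" using T_Vn_Eq a by blast
  show ?thesis using Tcop_eqI[OF i V E] .
qed

lemma T_sc: "f \<in> Vn N L n \<Longrightarrow> Tcop N L n i (sc c f) = sc c (Tcop N L n i f)"
proof -
  assume a: "f \<in> Vn N L n"
  have E: "Eq N i (sc c f) (sc c (Tcop N L n i f))" using Eq_sc[OF a] T_Vn_Eq[OF a] by blast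
  have V: "sc c (Tcop N L n i f) \<in> Vn N L n" using T_Vn_Eq a by blast
  show ?thesis using Tcop_eqI[OF i V E] .
qed

lemma T_diff: "f \<in> Vn N L n \<Longrightarrow> g \<in> Vn N L n \<Longrightarrow> Tcop N L n i (f - g) = Tcop N L n i f - Tcop N L n i g"
proof -
  assume a: "f \<in> Vn N L n" "g \<in> Vn N L n"
  have "Tcop N L n i (f + sc (-1) g) = Tcop N L n i f + sc (-1) (Tcop N L n i g)"
    using T_add[OF a(1) Vn_sc[OF a(2)]] T_sc[OF a(2)] by simp
  then show ?thesis by (simp add: sc_neg1)
qed

lemma T_minus: "f \<in> Vn N L n \<Longrightarrow> Tcop N L n i (- f) = - Tcop N L n i f"
  using T_sc[of f "-1"] by (simp add: sc_neg1)

lemma linV_T: "linV N L n (Tcop N L n i)"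
  unfolding linV_def using T_add T_sc by blast

lemma T_A: "g \<in> Vn N L n \<Longrightarrow> Tcop N L n i (zmul i g) =
   zmul (Suc i) (Tcop N L n i g) + sc (1 - qpar N ^ 2) (zmul (Suc i) g)"
proof -
  assume a: "g \<in> Vn N L n"
  have E: "Eq N i (zmul i g) (zmul (Suc i) (Tcop N L n i g) + sc (1 - qpar N ^ 2) (zmul (Suc i) g))"
    using raise1[OF i a] T_Vn_Eq[OF a] by blast
  have V: "zmul (Suc i) (Tcop N L n i g) + sc (1 - qpar N ^ 2) (zmul (Suc i) g) \<in> Vn N L n"
    using T_Vn_Eq a by (blast intro: Vn_add Vn_sc zmul_Vn)
  show ?thesis using Tcop_eqI[OF i V E] .
qed

lemma T_B: "g \<in> Vn N L n \<Longrightarrow> Tcop N L n i (zmul (Suc i) g) =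
   zmul i (Tcop N L n i g) + sc (qpar N ^ 2 - 1) (zmul (Suc i) g)"
proof -
  assume a: "g \<in> Vn N L n"
  have E: "Eq N i (zmul (Suc i) g) (zmul i (Tcop N L n i g) + sc (qpar N ^ 2 - 1) (zmul (Suc i) g))"
    using raise2[OF i a] T_Vn_Eq[OF a] by blast
  have V: "zmul i (Tcop N L n i g) + sc (qpar N ^ 2 - 1) (zmul (Suc i) g) \<in> Vn N L n"
    using T_Vn_Eq a by (blast intro: Vn_add Vn_sc zmul_Vn)
  show ?thesis using Tcop_eqI[OF i V E] .
qed

lemma T_base: "wf_lbl N L n x \<Longrightarrow> fst x ! (i - 1) = fst x ! i \<Longrightarrow> Tcop N L n i (bv x) = hb N i x"
  using base_Eq[OF i] hb_Vn[OF i] Tcop_eqI[OF i] by blast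


lemma swE_swE: "wf_lbl N L n x \<Longrightarrow> swE i (swE i x) = x"
  using i by (cases x) (simp add: swE_def wf_lbl_iff swp_swp)

lemma swE_fst: "fst (swE i x) = fst x" by (cases x) (simp add: swE_def)
lemma swE_es: "wf_lbl N L n x \<Longrightarrow> fst (snd (swE i x)) ! (i - 1) = fst (snd x) ! i \<and> fst (snd (swE i x)) ! i = fst (snd x) ! (i - 1)"
  using i by (cases x) (simp add: swE_def wf_lbl_iff swp_nth)

lemma hecke_bv: "wf_lbl N L n x \<Longrightarrow> Tcop N L n i (Tcop N L n i (bv x)) =
    sc (qpar N ^ 2 - 1) (Tcop N L n i (bv x)) + sc (qpar N ^ 2) (bv x)"
proof (induction "nat \<bar>fst x ! (i - 1) - fst x ! i\<bar>" arbitrary: x rule: less_induct)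
  case less
  obtain ex es vs where xe: "x = (ex, es, vs)" by (cases x) auto
  have len: "length ex = n" using less.prems xe by (simp add: wf_lbl_iff)
  define a where "a = ex ! (i - 1)"
  define b where "b = ex ! i"
  have i1: "i - 1 < n" "i - 1 \<noteq> i" using i by auto
  have X: "bv x \<in> Vn N L n" using less.prems by blast
  consider "a = b" | "b < a" | "a < b" by linarith
  then show ?case
  proof cases
    case 1
    have eqx: "fst x ! (i - 1) = fst x ! i" using 1 by (simp add: xe a_def b_def)
    have ws: "wf_lbl N L n (swE i x)" using wf_swE[OF i less.prems] .
    have Xs: "bv (swE i x) \<in> Vn N L n" using ws by blast
    have eqs: "fst (swE i x) ! (i - 1) = fst (swE i x) ! i" using eqx by (simp add: swE_fst)
    have T1: "Tcop N L n i (bv x) = hb N i x" using T_base[OF less.prems eqx] .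
    have T2: "Tcop N L n i (bv (swE i x)) = hb N i (swE i x)" using T_base[OF ws eqs] .
    have ss: "swE i (swE i x) = x" using swE_swE[OF less.prems] .
    have es: "fst (snd (swE i x)) ! (i - 1) = fst (snd x) ! i" "fst (snd (swE i x)) ! i = fst (snd x) ! (i - 1)"
      using swE_es[OF less.prems] by auto
    consider "fst (snd x) ! (i - 1) = fst (snd x) ! i" | "fst (snd x) ! (i - 1) < fst (snd x) ! i"
      | "fst (snd x) ! i < fst (snd x) ! (i - 1)" by linarith
    then show ?thesis
    proof cases
      case 1
      have H: "hb N i x = - bv x" using 1 by (simp add: hb_def Let_def)
      show ?thesis unfolding T1 H T_minus[OF X] T1 by (simp add: kap_simps algebra_simps)
    next
      case 2
      have H: "hb N i x = sc (qpar N ^ 2 - 1) (bv x) - sc (qpar N) (bv (swE i x))" using 2 by (simp add: hb_def Let_def)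
      have H2: "hb N i (swE i x) = - sc (qpar N) (bv x)" using 2 es ss by (simp add: hb_def Let_def)
      have "Tcop N L n i (hb N i x) = sc (qpar N ^ 2 - 1) (Tcop N L n i (bv x)) - sc (qpar N) (Tcop N L n i (bv (swE i x)))"
        unfolding H using X Xs by (simp add: T_diff T_sc Vn_sc)
      note TH = this
      show ?thesis unfolding T1 TH unfolding T1 T2 H2 H by (simp add: kap_simps algebra_simps power2_eq_square)
    next
      case 3
      have H: "hb N i x = - sc (qpar N) (bv (swE i x))" using 3 by (simp add: hb_def Let_def)
      have H2: "hb N i (swE i x) = sc (qpar N ^ 2 - 1) (bv (swE i x)) - sc (qpar N) (bv x)"
        using 3 es ss by (simp add: hb_def Let_def)
      have TH: "Tcop N L n i (hb N i x) = - sc (qpar N) (Tcop N L n i (bv (swE i x)))"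
        unfolding H using X Xs by (simp add: T_minus T_sc Vn_sc)
      show ?thesis unfolding T1 TH unfolding T1 T2 H2 H by (simp add: kap_simps algebra_simps power2_eq_square)
    qed
  next
    case 2
    define x' where "x' = (ex[i - 1 := a - 1], es, vs)"
    have w': "wf_lbl N L n x'" using less.prems by (simp add: x'_def xe wf_lbl_iff)
    have sx: "shift i x' = x" unfolding x'_def xe shift_def a_def using len i1
      by (simp add: nth_list_update)
    have x'a: "fst x' ! (i - 1) = a - 1" "fst x' ! i = b" using len i1 i by (simp_all add: x'_def b_def nth_list_update)
    have lt: "nat \<bar>fst x' ! (i - 1) - fst x' ! i\<bar> < nat \<bar>fst x ! (i - 1) - fst x ! i\<bar>"
      using 2 x'a by (simp add: xe a_def b_def)
    have IH: "Tcop N L n i (Tcop N L n i (bv x')) = sc (qpar N ^ 2 - 1) (Tcop N L n i (bv x')) + sc (qpar N ^ 2) (bv x')"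
      using less.hyps[OF lt w'] .
    have X': "bv x' \<in> Vn N L n" using w' by blast
    have TX': "Tcop N L n i (bv x') \<in> Vn N L n" using T_Vn[OF X'] .
    have bx: "bv x = zmul i (bv x')" using sx zmul_bv by metis
    let ?T = "Tcop N L n i" and ?c = "1 - qpar N ^ 2"
    have e1: "?T (zmul i (bv x')) = zmul (Suc i) (?T (bv x')) + sc ?c (zmul (Suc i) (bv x'))"
      using T_A[OF X'] .
    have e2a: "?T (?T (zmul i (bv x'))) = ?T (zmul (Suc i) (?T (bv x')) + sc ?c (zmul (Suc i) (bv x')))"
      using e1 by simp
    have e2: "?T (?T (zmul i (bv x'))) = ?T (zmul (Suc i) (?T (bv x'))) + sc ?c (?T (zmul (Suc i) (bv x')))"
      unfolding e2a using X' TX' by (simp add: T_add T_sc zmul_Vn Vn_sc)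
    have e3: "?T (zmul (Suc i) (?T (bv x'))) = zmul i (?T (?T (bv x'))) + sc (qpar N ^ 2 - 1) (zmul (Suc i) (?T (bv x')))"
      using T_B[OF TX'] .
    have e4: "?T (zmul (Suc i) (bv x')) = zmul i (?T (bv x')) + sc (qpar N ^ 2 - 1) (zmul (Suc i) (bv x'))"
      using T_B[OF X'] .
    show ?thesis unfolding bx e2 unfolding e3 e4 IH unfolding e1
      by (simp only: zsimps) (simp add: kap_simps zmul_kap algebra_simps)
  next
    case 3
    define x' where "x' = (ex[i := b - 1], es, vs)"
    have w': "wf_lbl N L n x'" using less.prems by (simp add: x'_def xe wf_lbl_iff)
    have sx: "shift (Suc i) x' = x" unfolding x'_def xe shift_def b_def using len i1 i
      by (simp add: nth_list_update)
    have x'a: "fst x' ! (i - 1) = a" "fst x' ! i = b - 1" using len i1 i by (simp_all add: x'_def a_def nth_list_update)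
    have lt: "nat \<bar>fst x' ! (i - 1) - fst x' ! i\<bar> < nat \<bar>fst x ! (i - 1) - fst x ! i\<bar>"
      using 3 x'a by (simp add: xe a_def b_def)
    have IH: "Tcop N L n i (Tcop N L n i (bv x')) = sc (qpar N ^ 2 - 1) (Tcop N L n i (bv x')) + sc (qpar N ^ 2) (bv x')"
      using less.hyps[OF lt w'] .
    have X': "bv x' \<in> Vn N L n" using w' by blast
    have TX': "Tcop N L n i (bv x') \<in> Vn N L n" using T_Vn[OF X'] .
    have bx: "bv x = zmul (Suc i) (bv x')" using sx zmul_bv by metis
    let ?T = "Tcop N L n i" and ?c = "qpar N ^ 2 - 1"
    have e1: "?T (zmul (Suc i) (bv x')) = zmul i (?T (bv x')) + sc ?c (zmul (Suc i) (bv x'))"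
      using T_B[OF X'] .
    have e2a: "?T (?T (zmul (Suc i) (bv x'))) = ?T (zmul i (?T (bv x')) + sc ?c (zmul (Suc i) (bv x')))"
      using e1 by simp
    have e2: "?T (?T (zmul (Suc i) (bv x'))) = ?T (zmul i (?T (bv x'))) + sc ?c (?T (zmul (Suc i) (bv x')))"
      unfolding e2a using X' TX' by (simp add: T_add T_sc zmul_Vn Vn_sc)
    have e3: "?T (zmul i (?T (bv x'))) = zmul (Suc i) (?T (?T (bv x'))) + sc (1 - qpar N ^ 2) (zmul (Suc i) (?T (bv x')))"
      using T_A[OF TX'] .
    show ?thesis unfolding bx e2 unfolding e3 IH unfolding e1
      by (simp only: zsimps) (simp add: kap_simps zmul_kap algebra_simps)
  qed
qed


lemma hecke: "f \<in> Vn N L n \<Longrightarrow> Tcop N L n i (Tcop N L n i f) =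
    sc (qpar N ^ 2 - 1) (Tcop N L n i f) + sc (qpar N ^ 2) f"
  apply (rule linV_basis_eq[of N L n "\<lambda>f. Tcop N L n i (Tcop N L n i f)"
     "\<lambda>f. sc (qpar N ^ 2 - 1) (Tcop N L n i f) + sc (qpar N ^ 2) f"])
  subgoal unfolding linV_def by (simp add: T_add T_sc T_Vn Vn_sc)
  subgoal unfolding linV_def by (simp add: T_add T_sc T_Vn Vn_sc sc_add algebra_simps sc_sc mult.commute)
  subgoal by (rule hecke_bv)
  by simp

end

lemma Fract_pow: "Fraction_Field.Fract a 1 ^ k = Fraction_Field.Fract (a ^ k) 1"
  by (induction k) (simp_all add: One_fract_def)

lemma Fract1_eq0: "(Fraction_Field.Fract (a::rat poly) 1 = 0) \<longleftrightarrow> a = 0"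
  by (simp add: Zero_fract_def eq_fract)

lemma qpar_alt: "qpar N = Fraction_Field.Fract ([:0, 1:] ^ (2 * N)) 1"
  by (simp add: qpar_def Fract_pow)

lemma qpar_nz: "qpar N \<noteq> 0"
  by (simp add: qpar_alt Fract1_eq0)

lemma qpar_sq1: "1 + qpar N ^ 2 \<noteq> 0"
proof -
  have "1 + qpar N ^ 2 = Fraction_Field.Fract (1 + ([:0, 1:] ^ (2 * N)) ^ 2) 1"
    by (simp add: qpar_alt Fract_pow One_fract_def)
  moreover have "poly (1 + (([:0, 1:] :: rat poly) ^ (2 * N)) ^ 2) 1 = 2" by simp
  then have "(1 + (([:0, 1:] :: rat poly) ^ (2 * N)) ^ 2) \<noteq> 0" by (metis poly_0 zero_neq_numeral)
  ultimately show ?thesis by (simp add: Fract1_eq0)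
qed

context
  fixes N L n i :: nat assumes i: "1 \<le> i" "i < n"
begin

lemma T_inj: "inj_on (Tcop N L n i) (Vn N L n)"
proof (rule inj_onI)
  fix f g assume f: "f \<in> Vn N L n" and g: "g \<in> Vn N L n" and e: "Tcop N L n i f = Tcop N L n i g"
  have "sc (qpar N ^ 2) f = Tcop N L n i (Tcop N L n i f) - sc (qpar N ^ 2 - 1) (Tcop N L n i f)"
    using hecke[OF i f] by simp
  also have "\<dots> = sc (qpar N ^ 2) g" using hecke[OF i g] e by simp
  finally have "sc (inverse (qpar N ^ 2)) (sc (qpar N ^ 2) f) = sc (inverse (qpar N ^ 2)) (sc (qpar N ^ 2) g)" by simp
  then show "f = g" using qpar_nz[of N] by (simp add: sc_sc)
qed

definition Tinv :: "vec \<Rightarrow> vec" where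
  "Tinv f = sc (inverse (qpar N ^ 2)) (Tcop N L n i f - sc (qpar N ^ 2 - 1) f)"

lemma Tinv_Vn: "f \<in> Vn N L n \<Longrightarrow> Tinv f \<in> Vn N L n"
  unfolding Tinv_def by (intro Vn_sc Vn_diff T_Vn[OF i]) auto

lemma T_Tinv: "f \<in> Vn N L n \<Longrightarrow> Tcop N L n i (Tinv f) = f"
proof -
  assume f: "f \<in> Vn N L n"
  have "Tcop N L n i (Tinv f) = sc (inverse (qpar N ^ 2)) (Tcop N L n i (Tcop N L n i f) - sc (qpar N ^ 2 - 1) (Tcop N L n i f))"
    unfolding Tinv_def using f by (simp add: T_sc[OF i] T_diff[OF i] Vn_sc Vn_diff T_Vn[OF i])
  also have "\<dots> = f" unfolding hecke[OF i f] using qpar_nz[of N] by (simp add: sc_sc)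
  finally show ?thesis .
qed

lemma Tinv_T: "f \<in> Vn N L n \<Longrightarrow> Tinv (Tcop N L n i f) = f"
  using T_inj T_Tinv Tinv_Vn T_Vn[OF i] by (meson inj_onD)

lemma Tc_inv_eq: "f \<in> Vn N L n \<Longrightarrow> Tc_inv N L n i f = Tinv f"
  unfolding Tc_inv_def using T_inj T_Tinv Tinv_Vn by (simp add: the_inv_into_f_eq)

end


definition good :: "int \<Rightarrow> int \<Rightarrow> lbl \<Rightarrow> bool" where
  "good K D x = ((\<forall>a\<in>set (fst x). a \<le> K) \<and> sum_list (fst x) = D)"

definition Sset :: "nat \<Rightarrow> nat \<Rightarrow> nat \<Rightarrow> int \<Rightarrow> int \<Rightarrow> vec set" where
  "Sset N L n K D = {f \<in> Vn N L n. \<forall>x\<in>supp f. good K D x}"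

lemma Sset_Vn: "f \<in> Sset N L n K D \<Longrightarrow> f \<in> Vn N L n" by (simp add: Sset_def)
lemma Sset_zero: "0 \<in> Sset N L n K D" by (simp add: Sset_def supp_def)
lemma Sset_I: "f \<in> Vn N L n \<Longrightarrow> (\<And>x. x \<in> supp f \<Longrightarrow> good K D x) \<Longrightarrow> f \<in> Sset N L n K D"
  by (simp add: Sset_def)
lemma Sset_good: "f \<in> Sset N L n K D \<Longrightarrow> x \<in> supp f \<Longrightarrow> good K D x"
  by (simp add: Sset_def)
lemma Sset_add: "f \<in> Sset N L n K D \<Longrightarrow> g \<in> Sset N L n K D \<Longrightarrow> f + g \<in> Sset N L n K D"
  using supp_add[of f g] Sset_good[of f] Sset_good[of g] Vn_add[OF Sset_Vn Sset_Vn, of f N L n K D g]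
  by (intro Sset_I) blast+
lemma Sset_diff: "f \<in> Sset N L n K D \<Longrightarrow> g \<in> Sset N L n K D \<Longrightarrow> f - g \<in> Sset N L n K D"
  using supp_diff[of f g] Sset_good[of f] Sset_good[of g] Vn_diff[OF Sset_Vn Sset_Vn, of f N L n K D g]
  by (intro Sset_I) blast+
lemma Sset_sc: "f \<in> Sset N L n K D \<Longrightarrow> sc c f \<in> Sset N L n K D"
  using supp_sc[of c f] Sset_good[of f] Vn_sc[OF Sset_Vn, of f N L n K D c] by (intro Sset_I) blast+
lemma Sset_uminus: "f \<in> Sset N L n K D \<Longrightarrow> - f \<in> Sset N L n K D"
  using supp_uminus[of f] Sset_good[of f] Vn_uminus[OF Sset_Vn, of f N L n K D] by (intro Sset_I) blast+
lemma Sset_sum: "(\<And>x. x \<in> A \<Longrightarrow> g x \<in> Sset N L n K D) \<Longrightarrow> (\<Sum>x\<in>A. g x) \<in> Sset N L n K D"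
proof (induction A rule: infinite_finite_induct)
  case (infinite A) then show ?case using Sset_zero by (metis sum.infinite)
next
  case empty then show ?case using Sset_zero by (metis sum.empty)
next
  case (insert x F)
  have a: "g x \<in> Sset N L n K D" using insert.prems by blast
  have b: "sum g F \<in> Sset N L n K D" using insert.IH insert.prems by blast
  show ?case using Sset_add[OF a b] sum.insert[OF insert.hyps(1,2)] by metis
qed
lemma Sset_bv: "wf_lbl N L n x \<Longrightarrow> good K D x \<Longrightarrow> bv x \<in> Sset N L n K D"
  by (simp add: Sset_def supp_bv Vn_bv)
lemma Sset_supp: "f \<in> Sset N L n K D \<Longrightarrow> x \<in> supp f \<Longrightarrow> wf_lbl N L n x \<and> good K D x"
  by (auto simp: Sset_def Vn_iff)

lemma Sset_linV:
  assumes P: "linV N L n P" and f: "f \<in> Sset N L n K D"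
    and B: "\<And>x. wf_lbl N L n x \<Longrightarrow> good K D x \<Longrightarrow> P (bv x) \<in> Sset N L n K D"
  shows "P f \<in> Sset N L n K D"
proof -
  have fV: "f \<in> Vn N L n" using f by (rule Sset_Vn)
  have fin: "finite (supp f)" using fV by (simp add: Vn_iff)
  have w: "\<And>x. x \<in> supp f \<Longrightarrow> wf_lbl N L n x \<and> good K D x" using f by (rule Sset_supp)
  have bV: "\<And>x. x \<in> supp f \<Longrightarrow> sc (f x) (bv x) \<in> Vn N L n" using w by (intro Vn_sc Vn_bv) blast
  have "P f = P (\<Sum>x\<in>supp f. sc (f x) (bv x))" using decomp fin by metis
  also have "\<dots> = (\<Sum>x\<in>supp f. P (sc (f x) (bv x)))"
    by (rule linV_sum[OF P bV])
  also have "\<dots> = (\<Sum>x\<in>supp f. sc (f x) (P (bv x)))"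
  proof (rule sum.cong)
    fix x assume x: "x \<in> supp f"
    have "bv x \<in> Vn N L n" using w[OF x] by (intro Vn_bv) blast
    then show "P (sc (f x) (bv x)) = sc (f x) (P (bv x))"
      using P unfolding linV_def by blast
  qed simp
  finally have e: "P f = (\<Sum>x\<in>supp f. sc (f x) (P (bv x)))" .
  have "(\<Sum>x\<in>supp f. sc (f x) (P (bv x))) \<in> Sset N L n K D"
  proof (rule Sset_sum)
    fix x assume x: "x \<in> supp f"
    have "P (bv x) \<in> Sset N L n K D" using w[OF x] B by blast
    then show "sc (f x) (P (bv x)) \<in> Sset N L n K D" by (rule Sset_sc)
  qed
  then show ?thesis using e by simp
qed

lemma sum_list_pair:
  assumes "length ys = length xs" "Suc p < length xs"
    "\<And>j. j < length xs \<Longrightarrow> j \<noteq> p \<Longrightarrow> j \<noteq> Suc p \<Longrightarrow> ys ! j = xs ! j"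
    "ys ! p + ys ! Suc p = xs ! p + (xs ! Suc p :: int)"
  shows "sum_list ys = sum_list xs"
proof -
  have "(\<Sum>j=0..<length xs. ys ! j - xs ! j) = (\<Sum>j\<in>{p, Suc p}. ys ! j - xs ! j)"
    using assms by (intro sum.mono_neutral_right) auto
  also have "\<dots> = 0" using assms(4) by simp
  finally have "(\<Sum>j=0..<length xs. ys ! j) - (\<Sum>j=0..<length xs. xs ! j) = 0"
    by (simp add: sum_subtractf)
  then show ?thesis using assms(1) by (simp add: sum_list_sum_nth)
qed

lemma inbox_good:
  assumes i: "1 \<le> i" "i < n" and w: "wf_lbl N L n x" and g: "good K D x" and b: "inbox N L n i x y"
  shows "good K D y"
proof -
  obtain ex es vs where xe: "x = (ex, es, vs)" by (cases x) auto
  obtain ey esy vsy where ye: "y = (ey, esy, vsy)" by (cases y) auto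
  have l: "length ex = n" "length ey = n" using w b xe ye by (auto simp: wf_lbl_iff inbox_def)
  have c: "\<And>j. j < n \<Longrightarrow> j \<noteq> i - 1 \<Longrightarrow> j \<noteq> i \<Longrightarrow> ey ! j = ex ! j"
    and s: "ey ! (i - 1) + ey ! i = ex ! (i - 1) + ex ! i"
    and r: "min (ex ! (i - 1)) (ex ! i) \<le> ey ! (i - 1)" "ey ! (i - 1) \<le> max (ex ! (i - 1)) (ex ! i)"
    using b by (auto simp: inbox_def xe ye)
  have Kx: "\<And>j. j < n \<Longrightarrow> ex ! j \<le> K" using g l by (auto simp: good_def xe)
  have ii: "i - 1 < n" "Suc (i - 1) = i" using i by auto
  have mK: "max (ex ! (i - 1)) (ex ! i) \<le> K" using Kx[OF ii(1)] Kx[OF i(2)] by simp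
  have mm: "min (ex ! (i - 1)) (ex ! i) + max (ex ! (i - 1)) (ex ! i) = ex ! (i - 1) + ex ! i" by simp
  have e1: "ey ! (i - 1) \<le> K" using r(2) mK by linarith
  have e2: "ey ! i \<le> K" using r(1) s mK mm by linarith
  have "ey ! j \<le> K" if j: "j < n" for j
  proof -
    consider "j = i - 1" | "j = i" | "j \<noteq> i - 1 \<and> j \<noteq> i" by blast
    then show ?thesis
    proof cases
      case 1 then show ?thesis using e1 by simp
    next
      case 2 then show ?thesis using e2 by simp
    next
      case 3 then show ?thesis using c[OF j] Kx[OF j] by simp
    qed
  qed
  then have "\<forall>a\<in>set ey. a \<le> K" using l by (auto simp: in_set_conv_nth)
  moreover have "sum_list ey = sum_list ex"
    using sum_list_pair[of ey ex "i - 1"] l c s ii i by auto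
  ultimately show ?thesis using g by (simp add: good_def xe ye)
qed

context
  fixes N L n i :: nat and K D :: int assumes i: "1 \<le> i" "i < n"
begin

lemma T_Sset: "f \<in> Sset N L n K D \<Longrightarrow> Tcop N L n i f \<in> Sset N L n K D"
proof (rule Sset_linV[OF linV_T[OF i]])
  fix x assume w: "wf_lbl N L n x" and g: "good K D x"
  have T: "Tcop N L n i (bv x) \<in> Vn N L n" "\<forall>y\<in>supp (Tcop N L n i (bv x)). inbox N L n i x y"
    using T_bv[OF i w] by auto
  show "Tcop N L n i (bv x) \<in> Sset N L n K D"
    using T inbox_good[OF i w g] by (auto simp: Sset_def)
qed

lemma Tinv_Sset: "f \<in> Sset N L n K D \<Longrightarrow> Tinv N L n i f \<in> Sset N L n K D"
proof -
  assume f: "f \<in> Sset N L n K D"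
  have "Tinv N L n i f = sc (inverse (qpar N ^ 2)) (Tcop N L n i f - sc (qpar N ^ 2 - 1) f)"
    by (rule Tinv_def[OF i])
  then show ?thesis using T_Sset[OF f] f by (simp add: Sset_sc Sset_diff)
qed

lemma swL_good: "wf_lbl N L n x \<Longrightarrow> good K D x \<Longrightarrow> good K D (swL i x)"
proof -
  assume w: "wf_lbl N L n x" and g: "good K D x"
  obtain ex es vs where xe: "x = (ex, es, vs)" by (cases x) auto
  have l: "length ex = n" using w xe by (simp add: wf_lbl_iff)
  have "sum_list (swp i ex) = sum_list ex"
    using sum_list_pair[of "swp i ex" ex "i - 1"] l i by (auto simp: swp_nth)
  then show ?thesis using g swp_set[of i ex] l i by (simp add: good_def xe swL_def)
qed

lemma sop_Sset: "f \<in> Sset N L n K D \<Longrightarrow> sop i f \<in> Sset N L n K D"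
proof (rule Sset_linV[OF linop_linV[OF linop_sop]])
  fix x assume w: "wf_lbl N L n x" and g: "good K D x"
  show "sop i (bv x) \<in> Sset N L n K D"
    unfolding sop_bv[OF i w] using wf_swL[OF i w] swL_good[OF w g] by (rule Sset_bv)
qed

lemma sop_sop: "f \<in> Vn N L n \<Longrightarrow> sop i (sop i f) = f"
  apply (rule linV_basis_eq[of N L n "\<lambda>f. sop i (sop i f)" "\<lambda>f. f"])
  apply (simp add: linV_def sop_add sop_sc)
  apply (simp add: linV_def)
  subgoal for x proof -
    assume w: "wf_lbl N L n x"
    show "sop i (sop i (bv x)) = bv x"
      using sop_bv[OF i w] sop_bv[OF i wf_swL[OF i w]] swL_swL[OF i w] by simp
  qed
  by simp

end


definition goodop :: "nat \<Rightarrow> nat \<Rightarrow> nat \<Rightarrow> int \<Rightarrow> int \<Rightarrow> (vec \<Rightarrow> vec) \<Rightarrow> bool" where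
  "goodop N L n K D P = ((\<forall>f\<in>Vn N L n. P f \<in> Vn N L n) \<and> (\<forall>f\<in>Sset N L n K D. P f \<in> Sset N L n K D) \<and>
     (\<exists>Q. (\<forall>f\<in>Vn N L n. Q f \<in> Vn N L n) \<and> (\<forall>f\<in>Sset N L n K D. Q f \<in> Sset N L n K D) \<and>
          (\<forall>f\<in>Vn N L n. Q (P f) = f \<and> P (Q f) = f)))"

lemma goodopI:
  assumes "\<And>f. f \<in> Vn N L n \<Longrightarrow> P f \<in> Vn N L n" "\<And>f. f \<in> Sset N L n K D \<Longrightarrow> P f \<in> Sset N L n K D"
    "\<And>f. f \<in> Vn N L n \<Longrightarrow> Q f \<in> Vn N L n" "\<And>f. f \<in> Sset N L n K D \<Longrightarrow> Q f \<in> Sset N L n K D"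
    "\<And>f. f \<in> Vn N L n \<Longrightarrow> Q (P f) = f" "\<And>f. f \<in> Vn N L n \<Longrightarrow> P (Q f) = f"
  shows "goodop N L n K D P"
  unfolding goodop_def
  apply (intro conjI ballI exI[where x=Q])
  by (simp_all add: assms)

lemma goodop_id: "goodop N L n K D id"
  by (rule goodopI[where Q = id]) simp_all

lemma goodop_comp:
  assumes A: "goodop N L n K D P" and B: "goodop N L n K D R"
  shows "goodop N L n K D (P \<circ> R)"
proof -
  obtain Q1 where Q1: "\<forall>f\<in>Vn N L n. Q1 f \<in> Vn N L n" "\<forall>f\<in>Sset N L n K D. Q1 f \<in> Sset N L n K D"
     "\<forall>f\<in>Vn N L n. Q1 (P f) = f \<and> P (Q1 f) = f" using A unfolding goodop_def by blast
  obtain Q2 where Q2: "\<forall>f\<in>Vn N L n. Q2 f \<in> Vn N L n" "\<forall>f\<in>Sset N L n K D. Q2 f \<in> Sset N L n K D"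
     "\<forall>f\<in>Vn N L n. Q2 (R f) = f \<and> R (Q2 f) = f" using B unfolding goodop_def by blast
  have P: "\<forall>f\<in>Vn N L n. P f \<in> Vn N L n" "\<forall>f\<in>Sset N L n K D. P f \<in> Sset N L n K D" using A unfolding goodop_def by blast+
  have R: "\<forall>f\<in>Vn N L n. R f \<in> Vn N L n" "\<forall>f\<in>Sset N L n K D. R f \<in> Sset N L n K D" using B unfolding goodop_def by blast+
  show ?thesis
  proof (rule goodopI[where Q = "Q2 \<circ> Q1"])
    fix f assume f: "f \<in> Vn N L n"
    show "(P \<circ> R) f \<in> Vn N L n" using P R f by simp
    show "(Q2 \<circ> Q1) f \<in> Vn N L n" using Q1 Q2 f by simp
    have "R f \<in> Vn N L n" using R f by blast
    then show "(Q2 \<circ> Q1) ((P \<circ> R) f) = f" using Q1(3) Q2(3) f by simp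
    have "Q1 f \<in> Vn N L n" using Q1 f by blast
    then show "(P \<circ> R) ((Q2 \<circ> Q1) f) = f" using Q1(3) Q2(3) f by simp
  next
    fix f assume f: "f \<in> Sset N L n K D"
    show "(P \<circ> R) f \<in> Sset N L n K D" using P R f by simp
    show "(Q2 \<circ> Q1) f \<in> Sset N L n K D" using Q1 Q2 f by simp
  qed
qed

lemma goodop_foldr: "(\<And>P. P \<in> set ps \<Longrightarrow> goodop N L n K D P) \<Longrightarrow> goodop N L n K D (foldr (\<circ>) ps id)"
  by (induction ps) (auto intro: goodop_comp goodop_id)

lemma goodop_cong: "goodop N L n K D P' \<Longrightarrow> (\<And>f. f \<in> Vn N L n \<Longrightarrow> P f = P' f) \<Longrightarrow> goodop N L n K D P"
proof -
  assume A: "goodop N L n K D P'" and e: "\<And>f. f \<in> Vn N L n \<Longrightarrow> P f = P' f"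
  obtain Q where Q: "\<forall>f\<in>Vn N L n. Q f \<in> Vn N L n" "\<forall>f\<in>Sset N L n K D. Q f \<in> Sset N L n K D"
     "\<forall>f\<in>Vn N L n. Q (P' f) = f \<and> P' (Q f) = f" using A unfolding goodop_def by blast
  have P: "\<forall>f\<in>Vn N L n. P' f \<in> Vn N L n" "\<forall>f\<in>Sset N L n K D. P' f \<in> Sset N L n K D" using A unfolding goodop_def by blast+
  show ?thesis
  proof (rule goodopI[where Q = Q])
    fix f assume f: "f \<in> Vn N L n"
    show "P f \<in> Vn N L n" using P f e by simp
    show "Q f \<in> Vn N L n" using Q f by simp
    show "Q (P f) = f" using Q f e by simp
    have "Q f \<in> Vn N L n" using Q f by blast
    then show "P (Q f) = f" using Q f e by simp
  next
    fix f assume f: "f \<in> Sset N L n K D"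
    show "P f \<in> Sset N L n K D" using P f e Sset_Vn by metis
    show "Q f \<in> Sset N L n K D" using Q f by simp
  qed
qed

lemma goodop_sc: "c \<noteq> 0 \<Longrightarrow> goodop N L n K D (sc c)"
  by (rule goodopI[where Q = "sc (inverse c)"]) (auto simp: Vn_sc Sset_sc sc_sc)

lemma goodop_weight:
  assumes w: "\<And>y. w y \<noteq> 0"
  shows "goodop N L n K D (\<lambda>f y. w y * f y)"
proof -
  have s: "\<And>f. supp (\<lambda>y. w y * f y) = supp f" "\<And>f. supp (\<lambda>y. inverse (w y) * f y) = supp f"
    using w by (auto simp: supp_def)
  have V: "\<And>f. f \<in> Vn N L n \<Longrightarrow> (\<lambda>y. w y * f y) \<in> Vn N L n" "\<And>f. f \<in> Vn N L n \<Longrightarrow> (\<lambda>y. inverse (w y) * f y) \<in> Vn N L n"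
    using s by (auto simp: Vn_iff)
  have S: "\<And>f. f \<in> Sset N L n K D \<Longrightarrow> (\<lambda>y. w y * f y) \<in> Sset N L n K D"
     "\<And>f. f \<in> Sset N L n K D \<Longrightarrow> (\<lambda>y. inverse (w y) * f y) \<in> Sset N L n K D"
    using s V by (auto simp: Sset_def)
  show ?thesis
    by (rule goodopI[where Q = "\<lambda>f y. inverse (w y) * f y"]) (auto simp: V S w)
qed

context
  fixes N L n i :: nat and K D :: int assumes i: "1 \<le> i" "i < n"
begin

lemma goodop_T: "goodop N L n K D (Tcop N L n i)"
  by (rule goodopI[where Q = "Tinv N L n i"])
    (auto simp: T_Vn[OF i] T_Sset[OF i] Tinv_Vn[OF i] Tinv_Sset[OF i] Tinv_T[OF i] T_Tinv[OF i])

lemma goodop_Tinv: "goodop N L n K D (Tinv N L n i)"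
  by (rule goodopI[where Q = "Tcop N L n i"])
    (auto simp: T_Vn[OF i] T_Sset[OF i] Tinv_Vn[OF i] Tinv_Sset[OF i] Tinv_T[OF i] T_Tinv[OF i])

lemma goodop_Tt_inv: "goodop N L n K D (Tt_inv N L n i)"
proof -
  have "Tt_inv N L n i = sc (- inverse (qpar N)) \<circ> Tcop N L n i" by (rule ext) (simp add: Tt_inv_def)
  then show ?thesis using goodop_comp[OF goodop_sc goodop_T] qpar_nz by simp
qed

lemma goodop_Tt: "goodop N L n K D (Tt N L n i)"
proof (rule goodop_cong)
  show "goodop N L n K D (sc (- qpar N) \<circ> Tinv N L n i)"
    using goodop_comp[OF goodop_sc goodop_Tinv] qpar_nz by simp
  fix f assume "f \<in> Vn N L n"
  then show "Tt N L n i f = (sc (- qpar N) \<circ> Tinv N L n i) f" by (simp add: Tt_def Tc_inv_eq[OF i])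
qed

lemma goodop_sop: "goodop N L n K D (sop i)"
  by (rule goodopI[where Q = "sop i"]) (auto simp: sop_Vn[OF i] sop_Sset[OF i] sop_sop[OF i])

end

lemma goodop_pD1: "goodop N L n K D (pD1 N pe)"
proof -
  have "pD1 N pe = (\<lambda>f y. (case y of (ex, es, vs) \<Rightarrow> (qpar N powi pe) powi (ex ! 0)) * f y)"
    by (rule ext, rule ext) (simp add: pD1_def split: prod.splits)
  moreover have "goodop N L n K D (\<lambda>f y. (case y of (ex, es, vs) \<Rightarrow> (qpar N powi pe) powi (ex ! 0)) * f y)"
    by (rule goodop_weight) (simp add: qpar_nz split: prod.splits)
  ultimately show ?thesis by simp
qed

lemma goodop_qnu1: "goodop N L n K D (qnu1 N L \<nu>)"
proof -
  have "qnu1 N L \<nu> = (\<lambda>f y. (case y of (ex, es, vs) \<Rightarrow> qpar N powi \<nu> (L + 1 - es ! 0)) * f y)"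
    by (rule ext, rule ext) (simp add: qnu1_def split: prod.splits)
  moreover have "goodop N L n K D (\<lambda>f y. (case y of (ex, es, vs) \<Rightarrow> qpar N powi \<nu> (L + 1 - es ! 0)) * f y)"
    by (rule goodop_weight) (simp add: qpar_nz split: prod.splits)
  ultimately show ?thesis by simp
qed

lemma goodop_Yq: "1 \<le> j \<Longrightarrow> j \<le> n \<Longrightarrow> goodop N L n K D (Yq N L n pe \<nu> j)"
proof -
  assume j: "1 \<le> j" "j \<le> n"
  have "goodop N L n K D (Yop N L n pe \<nu> j)"
    unfolding Yop_def
  proof (rule goodop_foldr)
    fix P assume "P \<in> set (map (Tt_inv N L n) [j..<n] @ map sop (rev [1..<n]) @ [pD1 N pe, qnu1 N L \<nu>]
      @ map (Tt N L n) [1..<j])"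
    then show "goodop N L n K D P" using j
      by (auto intro: goodop_Tt_inv goodop_Tt goodop_sop goodop_pD1 goodop_qnu1)
  qed
  moreover have "Yq N L n pe \<nu> j = sc (qpar N powi (- int (nn N L n))) \<circ> Yop N L n pe \<nu> j"
    by (rule ext) (simp add: Yq_def)
  ultimately show ?thesis using goodop_comp[OF goodop_sc] qpar_nz by simp
qed

lemma goodop_inv_Sset:
  assumes A: "goodop N L n K D P" and g: "g \<in> Sset N L n K D"
  shows "the_inv_into (Vn N L n) P g \<in> Sset N L n K D"
proof -
  obtain Q where Q: "\<forall>f\<in>Vn N L n. Q f \<in> Vn N L n" "\<forall>f\<in>Sset N L n K D. Q f \<in> Sset N L n K D"
     "\<forall>f\<in>Vn N L n. Q (P f) = f \<and> P (Q f) = f" using A unfolding goodop_def by blast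
  have inj: "inj_on P (Vn N L n)" by (rule inj_onI) (metis Q(3))
  have gV: "g \<in> Vn N L n" using g by (rule Sset_Vn)
  have "the_inv_into (Vn N L n) P g = Q g"
    using the_inv_into_f_eq[OF inj, of "Q g" g] Q gV by simp
  then show ?thesis using Q g by simp
qed

lemma Yq_inv_Sset: "1 \<le> j \<Longrightarrow> j \<le> n \<Longrightarrow> g \<in> Sset N L n K D \<Longrightarrow> Yq_inv N L n pe \<nu> j g \<in> Sset N L n K D"
  unfolding Yq_inv_def using goodop_inv_Sset goodop_Yq by blast

lemma Yq_Sset: "1 \<le> j \<Longrightarrow> j \<le> n \<Longrightarrow> g \<in> Sset N L n K D \<Longrightarrow> Yq N L n pe \<nu> j g \<in> Sset N L n K D"
  using goodop_Yq unfolding goodop_def by blast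


lemma lin_Sset: "f \<in> Sset N L n K D \<Longrightarrow> (\<And>x. wf_lbl N L n x \<Longrightarrow> good K D x \<Longrightarrow> F x \<in> Sset N L n K D)
  \<Longrightarrow> lin F f \<in> Sset N L n K D"
  by (rule Sset_linV[OF linV_lin]) simp_all

lemma rep_range: "1 \<le> N \<Longrightarrow> 1 \<le> rep N i \<and> rep N i \<le> N"
  by (auto simp: rep_def)

lemma wf_vs_upd: "wf_lbl N L n (ex, es, vs) \<Longrightarrow> 1 \<le> r \<Longrightarrow> r \<le> N \<Longrightarrow> wf_lbl N L n (ex, es, vs[k := r])"
  using set_update_subset_insert[of vs k r] by (auto simp: wf_lbl_iff)

lemma good_vs: "good K D (ex, es, vs) \<Longrightarrow> good K D (ex, es', vs')"
  by (simp add: good_def)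

lemma EvOp_Sset: "1 \<le> N \<Longrightarrow> f \<in> Sset N L n K D \<Longrightarrow> EvOp N n i j f \<in> Sset N L n K D"
  unfolding EvOp_def
proof (rule lin_Sset)
  fix x assume N: "1 \<le> N" and w: "wf_lbl N L n x" and g: "good K D x"
  obtain ex es vs where xe: "x = (ex, es, vs)" by (cases x) auto
  have "bv (ex, es, vs[j - 1 := rep N i]) \<in> Sset N L n K D"
    using wf_vs_upd[of N L n ex es vs "rep N i"] rep_range[OF N, of i] w g good_vs[of K D ex es vs]
    by (intro Sset_bv) (auto simp: xe)
  then show "(case x of (ex, es, vs) \<Rightarrow> if vs ! (j - 1) mod N = (i + 1) mod N
      then sc (\<Prod>m\<in>{j+1..n}. kcoef N i (vs ! (m - 1))) (bv (ex, es, vs[j - 1 := rep N i])) else 0)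
      \<in> Sset N L n K D"
    by (simp add: xe Sset_sc Sset_zero)
qed

lemma FvOp_Sset: "1 \<le> N \<Longrightarrow> f \<in> Sset N L n K D \<Longrightarrow> FvOp N n i j f \<in> Sset N L n K D"
  unfolding FvOp_def
proof (rule lin_Sset)
  fix x assume N: "1 \<le> N" and w: "wf_lbl N L n x" and g: "good K D x"
  obtain ex es vs where xe: "x = (ex, es, vs)" by (cases x) auto
  have "bv (ex, es, vs[j - 1 := rep N (i + 1)]) \<in> Sset N L n K D"
    using wf_vs_upd[of N L n ex es vs "rep N (i + 1)"] rep_range[OF N, of "i + 1"] w g good_vs[of K D ex es vs]
    by (intro Sset_bv) (auto simp: xe)
  then show "(case x of (ex, es, vs) \<Rightarrow> if vs ! (j - 1) mod N = i mod N
      then sc (\<Prod>m\<in>{1..<j}. inverse (kcoef N i (vs ! (m - 1)))) (bv (ex, es, vs[j - 1 := rep N (i + 1)])) else 0)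
      \<in> Sset N L n K D"
    by (simp add: xe Sset_sc Sset_zero)
qed

lemma KvOp_Sset: "f \<in> Sset N L n K D \<Longrightarrow> KvOp N n i f \<in> Sset N L n K D"
  unfolding KvOp_def
proof (rule lin_Sset)
  fix x assume w: "wf_lbl N L n x" and g: "good K D x"
  obtain ex es vs where xe: "x = (ex, es, vs)" by (cases x) auto
  show "(case x of (ex, es, vs) \<Rightarrow> sc (\<Prod>m\<in>{1..n}. kcoef N i (vs ! (m - 1))) (bv x)) \<in> Sset N L n K D"
    using Sset_bv[OF w g] by (simp add: xe Sset_sc)
qed

lemma piE_Sset: "1 \<le> N \<Longrightarrow> f \<in> Sset N L n K D \<Longrightarrow> piE N L n pe \<nu> i f \<in> Sset N L n K D"
  unfolding piE_def
proof (rule Sset_sum)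
  fix j assume N: "1 \<le> N" and f: "f \<in> Sset N L n K D" and j: "j \<in> {1..n}"
  have E: "EvOp N n i j f \<in> Sset N L n K D" using EvOp_Sset[OF N f] .
  show "(if i = 0 then Yq_inv N L n pe \<nu> j else id) (EvOp N n i j f) \<in> Sset N L n K D"
    using Yq_inv_Sset[OF _ _ E] j E by auto
qed

lemma piF_Sset: "1 \<le> N \<Longrightarrow> f \<in> Sset N L n K D \<Longrightarrow> piF N L n pe \<nu> i f \<in> Sset N L n K D"
  unfolding piF_def
proof (rule Sset_sum)
  fix j assume N: "1 \<le> N" and f: "f \<in> Sset N L n K D" and j: "j \<in> {1..n}"
  have E: "FvOp N n i j f \<in> Sset N L n K D" using FvOp_Sset[OF N f] .
  show "(if i = 0 then Yq N L n pe \<nu> j else id) (FvOp N n i j f) \<in> Sset N L n K D"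
    using Yq_Sset[OF _ _ E] j E by auto
qed

lemma piK_Sset: "f \<in> Sset N L n K D \<Longrightarrow> piK N n i f \<in> Sset N L n K D"
  unfolding piK_def by (rule KvOp_Sset)


lemma lspan_zero: "0 \<in> lspan S"
  unfolding lspan_def by (rule CollectI, rule exI[of _ "{}"]) simp

lemma lspan_base: "g \<in> S \<Longrightarrow> g \<in> lspan S"
  unfolding lspan_def by (rule CollectI, rule exI[of _ "{g}"], rule exI[of _ "\<lambda>_. 1"]) simp

lemma lspan_sc: "f \<in> lspan S \<Longrightarrow> sc a f \<in> lspan S"
proof -
  assume "f \<in> lspan S"
  then obtain A c where A: "finite A" "A \<subseteq> S" "f = (\<Sum>g\<in>A. sc (c g) g)" by (auto simp: lspan_def)
  have "sc a f = (\<Sum>g\<in>A. sc (a * c g) g)" unfolding A(3) sc_sum by (simp add: sc_sc)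
  then show ?thesis using A unfolding lspan_def
    by (intro CollectI exI[of _ A] exI[of _ "\<lambda>g. a * c g"]) simp
qed

lemma lspan_add: "f1 \<in> lspan S \<Longrightarrow> f2 \<in> lspan S \<Longrightarrow> f1 + f2 \<in> lspan S"
proof -
  assume "f1 \<in> lspan S" "f2 \<in> lspan S"
  then obtain A1 c1 A2 c2 where A: "finite A1" "A1 \<subseteq> S" "f1 = (\<Sum>g\<in>A1. sc (c1 g) g)"
    "finite A2" "A2 \<subseteq> S" "f2 = (\<Sum>g\<in>A2. sc (c2 g) g)" by (auto simp: lspan_def)
  define c where "c g = (if g \<in> A1 then c1 g else 0) + (if g \<in> A2 then c2 g else 0)" for g
  have e1: "(\<Sum>g\<in>A1 \<union> A2. sc (if g \<in> A1 then c1 g else 0) g) = f1"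
    unfolding A(3) using A by (intro sum.mono_neutral_cong_right) auto
  have e2: "(\<Sum>g\<in>A1 \<union> A2. sc (if g \<in> A2 then c2 g else 0) g) = f2"
    unfolding A(6) using A by (intro sum.mono_neutral_cong_right) auto
  have "f1 + f2 = (\<Sum>g\<in>A1 \<union> A2. sc (c g) g)"
    unfolding c_def sc_add_left sum.distrib e1 e2 ..
  then show ?thesis using A unfolding lspan_def by (intro CollectI exI[of _ "A1 \<union> A2"] exI[of _ c]) simp
qed

lemma lspan_diff: "f1 \<in> lspan S \<Longrightarrow> f2 \<in> lspan S \<Longrightarrow> f1 - f2 \<in> lspan S"
  using lspan_add[of f1 S "sc (-1) f2"] lspan_sc[of f2 S "-1"] by (simp add: sc_neg1)

lemma lspan_minus: "f \<in> lspan S \<Longrightarrow> - f \<in> lspan S"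
  using lspan_sc[of f S "-1"] by (simp add: sc_neg1)

definition Rr :: "vec set \<Rightarrow> vec set \<Rightarrow> vec \<Rightarrow> bool" where
  "Rr A B f = (\<exists>g\<in>lspan A. f - g \<in> lspan B)"

lemma Rr_zero: "Rr A B 0" unfolding Rr_def by (rule bexI[of _ 0]) (simp_all add: lspan_zero)
lemma Rr_A: "f \<in> A \<Longrightarrow> Rr A B f" unfolding Rr_def by (rule bexI[of _ f]) (simp_all add: lspan_zero lspan_base)
lemma Rr_B: "f \<in> lspan B \<Longrightarrow> Rr A B f" unfolding Rr_def by (rule bexI[of _ 0]) (simp_all add: lspan_zero)
lemma Rr_add: "Rr A B f \<Longrightarrow> Rr A B g \<Longrightarrow> Rr A B (f + g)"
proof -
  assume "Rr A B f" "Rr A B g"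
  then obtain f' g' where "f' \<in> lspan A" "f - f' \<in> lspan B" "g' \<in> lspan A" "g - g' \<in> lspan B"
    by (auto simp: Rr_def)
  moreover have "f + g - (f' + g') = (f - f') + (g - g')" by simp
  ultimately show ?thesis unfolding Rr_def using lspan_add by metis
qed
lemma Rr_sc: "Rr A B f \<Longrightarrow> Rr A B (sc c f)"
proof -
  assume "Rr A B f"
  then obtain f' where "f' \<in> lspan A" "f - f' \<in> lspan B" by (auto simp: Rr_def)
  moreover have "sc c f - sc c f' = sc c (f - f')" by (simp add: sc_diff)
  ultimately show ?thesis unfolding Rr_def using lspan_sc by metis
qed
lemma Rr_minus: "Rr A B f \<Longrightarrow> Rr A B (- f)" using Rr_sc[of A B f "-1"] by (simp add: sc_neg1)
lemma Rr_diff: "Rr A B f \<Longrightarrow> Rr A B g \<Longrightarrow> Rr A B (f - g)"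
  using Rr_add[of A B f "- g"] Rr_minus[of A B g] by simp
lemma Rr_equiv: "Rr A B f \<Longrightarrow> h - f \<in> lspan B \<Longrightarrow> Rr A B h"
proof -
  assume "Rr A B f" "h - f \<in> lspan B"
  then obtain f' where "f' \<in> lspan A" "f - f' \<in> lspan B" "h - f \<in> lspan B" by (auto simp: Rr_def)
  moreover have "h - f' = (h - f) + (f - f')" by simp
  ultimately show ?thesis unfolding Rr_def using lspan_add by metis
qed
lemma Rr_unsc: "c \<noteq> 0 \<Longrightarrow> Rr A B (sc c f) \<Longrightarrow> Rr A B f"
  using Rr_sc[of A B "sc c f" "inverse c"] by (simp add: sc_sc)

lemma Rr_sum: "(\<And>x. x \<in> S \<Longrightarrow> Rr A B (g x)) \<Longrightarrow> Rr A B (\<Sum>x\<in>S. g x)"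
proof (induction S rule: infinite_finite_induct)
  case (infinite S) then show ?case using Rr_zero by (metis sum.infinite)
next
  case empty then show ?case using Rr_zero by (metis sum.empty)
next
  case (insert x F)
  have a: "Rr A B (g x)" using insert.prems by blast
  have b: "Rr A B (sum g F)" using insert.IH insert.prems by blast
  show ?case using Rr_add[OF a b] sum.insert[OF insert.hyps(1,2)] by metis
qed

lemma Rr_supp: "finite (supp f) \<Longrightarrow> (\<And>y. y \<in> supp f \<Longrightarrow> Rr A B (bv y)) \<Longrightarrow> Rr A B f"
proof -
  assume fin: "finite (supp f)" and h: "\<And>y. y \<in> supp f \<Longrightarrow> Rr A B (bv y)"
  have "Rr A B (\<Sum>x\<in>supp f. sc (f x) (bv x))"
  proof (rule Rr_sum)
    fix x assume "x \<in> supp f" then show "Rr A B (sc (f x) (bv x))" by (rule Rr_sc[OF h])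
  qed
  then show ?thesis using decomp[OF fin] by metis
qed

definition swV :: "nat \<Rightarrow> lbl \<Rightarrow> lbl" where
  "swV i x = (case x of (ex, es, vs) \<Rightarrow> (ex, es, swp i vs))"

lemma Tsop_bv: "Tsop N i (bv (ex, es, vs)) =
   (if vs ! (i - 1) = vs ! i then sc (qpar N ^ 2) (bv (ex, es, vs))
    else if vs ! (i - 1) < vs ! i then sc (qpar N) (bv (swV i (ex, es, vs)))
    else sc (qpar N) (bv (swV i (ex, es, vs))) + sc (qpar N ^ 2 - 1) (bv (ex, es, vs)))"
  by (simp add: Tsop_def swV_def Let_def sc_def plus_fun_def)

lemma W_rel: "1 \<le> i \<Longrightarrow> i < n \<Longrightarrow> f \<in> Vn N L n \<Longrightarrow> Tcop N L n i f - Tsop N i f \<in> Wsub N L n"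
  unfolding Wsub_def by (rule lspan_base, rule CollectI, rule exI[of _ i], rule exI[of _ f]) simp


definition mu1 :: "nat \<Rightarrow> lbl \<Rightarrow> nat" where "mu1 n x = nat (\<Sum>j<n. (fst x ! j)^2)"
definition mu2 :: "nat \<Rightarrow> int \<Rightarrow> lbl \<Rightarrow> nat" where
  "mu2 n K x = nat (K * (\<Sum>j<n. int (Suc j)) - (\<Sum>j<n. int (Suc j) * fst x ! j))"
definition mu3 :: "nat \<Rightarrow> nat \<Rightarrow> lbl \<Rightarrow> nat" where
  "mu3 n L x = nat (int L * (\<Sum>j<n. int (Suc j)) - (\<Sum>j<n. int (Suc j) * int (fst (snd x) ! j)))"
definition mu4 :: "nat \<Rightarrow> lbl \<Rightarrow> nat" where
  "mu4 n x = nat (\<Sum>j<n. int (Suc j) * int (snd (snd x) ! j))"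
definition murel :: "nat \<Rightarrow> int \<Rightarrow> nat \<Rightarrow> (lbl \<times> lbl) set" where
  "murel n K L = measures [mu1 n, mu2 n K, mu3 n L, mu4 n]"

lemma wf_murel: "wf (murel n K L)" by (simp add: murel_def)

lemma pair_sum:
  fixes F :: "nat \<Rightarrow> 'a \<Rightarrow> int"
  assumes "Suc p < n" "\<And>j. j < n \<Longrightarrow> j \<noteq> p \<Longrightarrow> j \<noteq> Suc p \<Longrightarrow> ys ! j = xs ! j"
  shows "(\<Sum>j<n. F j (ys ! j)) = (\<Sum>j<n. F j (xs ! j)) + (F p (ys ! p) - F p (xs ! p))
     + (F (Suc p) (ys ! Suc p) - F (Suc p) (xs ! Suc p))"
proof -
  have "(\<Sum>j<n. F j (ys ! j) - F j (xs ! j)) = (\<Sum>j\<in>{p, Suc p}. F j (ys ! j) - F j (xs ! j))"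
    using assms by (intro sum.mono_neutral_right) auto
  then show ?thesis by (simp add: sum_subtractf)
qed

lemma bound2: "length (fst y) = n \<Longrightarrow> good K D y \<Longrightarrow> (\<Sum>j<n. int (Suc j) * fst y ! j) \<le> K * (\<Sum>j<n. int (Suc j))"
proof -
  assume l: "length (fst y) = n" and g: "good K D y"
  have "\<And>j. j < n \<Longrightarrow> fst y ! j \<le> K" using l g by (auto simp: good_def)
  then have "(\<Sum>j<n. int (Suc j) * fst y ! j) \<le> (\<Sum>j<n. int (Suc j) * K)"
    by (intro sum_mono mult_left_mono) auto
  then show ?thesis by (simp add: sum_distrib_left mult.commute)
qed

lemma bound3: "wf_lbl N L n y \<Longrightarrow> (\<Sum>j<n. int (Suc j) * int (fst (snd y) ! j)) \<le> int L * (\<Sum>j<n. int (Suc j))"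
proof -
  assume w: "wf_lbl N L n y"
  obtain ey esy vsy where ye: "y = (ey, esy, vsy)" by (cases y) auto
  have "\<And>j. j < n \<Longrightarrow> esy ! j \<le> L" using w by (auto simp: wf_lbl_iff ye)
  then have "(\<Sum>j<n. int (Suc j) * int (esy ! j)) \<le> (\<Sum>j<n. int (Suc j) * int L)"
    by (intro sum_mono mult_left_mono) auto
  then show ?thesis by (simp add: sum_distrib_left mult.commute ye)
qed

lemma smallerA:
  assumes p: "Suc p < n" and ly: "length (fst y) = n" and gy: "good K D y"
    and agree: "\<And>j. j < n \<Longrightarrow> j \<noteq> p \<Longrightarrow> j \<noteq> Suc p \<Longrightarrow> fst y ! j = fst x ! j"
    and sum: "fst y ! p + fst y ! Suc p = fst x ! p + fst x ! Suc p"
    and r: "fst x ! Suc p \<le> fst y ! p" "fst y ! p < fst x ! p"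
  shows "(y, x) \<in> murel n K L"
proof -
  define a where "a = fst x ! p"
  define b where "b = fst x ! Suc p"
  define a' where "a' = fst y ! p"
  define b' where "b' = fst y ! Suc p"
  have b': "b' = a + b - a'" using sum by (simp add: a_def b_def a'_def b'_def)
  have s1: "(\<Sum>j<n. (fst y ! j)^2) = (\<Sum>j<n. (fst x ! j)^2) + (a'^2 - a^2) + (b'^2 - b^2)"
    using pair_sum[OF p, of "fst y" "fst x" "\<lambda>j v. v^2"] agree by (simp add: a_def b_def a'_def b'_def)
  have sq: "(a'^2 - a^2) + (b'^2 - b^2) = 2 * (a' - a) * (a' - b)"
    unfolding b' by (simp add: power2_eq_square algebra_simps)
  have nn: "0 \<le> (\<Sum>j<n. (fst y ! j)^2)" by (intro sum_nonneg) simp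
  show ?thesis
  proof (cases "a' = b")
    case False
    then have "a' - b > 0" "a' - a < 0" using r by (simp_all add: a_def b_def a'_def)
    then have "2 * (a' - a) * (a' - b) < 0" by (simp add: mult_neg_pos)
    then have "mu1 n y < mu1 n x" unfolding mu1_def using s1 sq nn by simp
    then show ?thesis by (simp add: murel_def)
  next
    case True
    then have "(a'^2 - a^2) + (b'^2 - b^2) = 0" using sq by simp
    then have e1: "mu1 n y = mu1 n x" unfolding mu1_def using s1 by simp
    have s2: "(\<Sum>j<n. int (Suc j) * fst y ! j) = (\<Sum>j<n. int (Suc j) * fst x ! j)
        + (int (Suc p) * a' - int (Suc p) * a) + (int (Suc (Suc p)) * b' - int (Suc (Suc p)) * b)"
      using pair_sum[OF p, of "fst y" "fst x" "\<lambda>j v. int (Suc j) * v"] agree by (simp add: a_def b_def a'_def b'_def)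
    have "(int (Suc p) * a' - int (Suc p) * a) + (int (Suc (Suc p)) * b' - int (Suc (Suc p)) * b) = a - b"
      using True b' by (simp add: algebra_simps)
    moreover have "a - b > 0" using r True by (simp add: a_def b_def a'_def)
    ultimately have "(\<Sum>j<n. int (Suc j) * fst y ! j) > (\<Sum>j<n. int (Suc j) * fst x ! j)" using s2 by linarith
    then have "mu2 n K y < mu2 n K x" unfolding mu2_def using bound2[OF ly gy] by linarith
    then show ?thesis using e1 by (simp add: murel_def)
  qed
qed

lemma smallerB:
  assumes p: "Suc p < n" and w: "wf_lbl N L n y" and ex: "fst y = fst x"
    and agree: "\<And>j. j < n \<Longrightarrow> j \<noteq> p \<Longrightarrow> j \<noteq> Suc p \<Longrightarrow> fst (snd y) ! j = fst (snd x) ! j"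
    and sw: "fst (snd y) ! p = fst (snd x) ! Suc p" "fst (snd y) ! Suc p = fst (snd x) ! p"
    and lt: "fst (snd x) ! Suc p < fst (snd x) ! p"
  shows "(y, x) \<in> murel n K L"
proof -
  have s: "(\<Sum>j<n. int (Suc j) * int (fst (snd y) ! j)) = (\<Sum>j<n. int (Suc j) * int (fst (snd x) ! j))
      + (int (Suc p) * int (fst (snd y) ! p) - int (Suc p) * int (fst (snd x) ! p))
      + (int (Suc (Suc p)) * int (fst (snd y) ! Suc p) - int (Suc (Suc p)) * int (fst (snd x) ! Suc p))"
    using pair_sum[OF p, of "fst (snd y)" "fst (snd x)" "\<lambda>j v. int (Suc j) * int v"] agree by simp
  have "(int (Suc p) * int (fst (snd y) ! p) - int (Suc p) * int (fst (snd x) ! p))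
      + (int (Suc (Suc p)) * int (fst (snd y) ! Suc p) - int (Suc (Suc p)) * int (fst (snd x) ! Suc p))
      = int (fst (snd x) ! p) - int (fst (snd x) ! Suc p)" using sw by (simp add: algebra_simps)
  then have "(\<Sum>j<n. int (Suc j) * int (fst (snd y) ! j)) > (\<Sum>j<n. int (Suc j) * int (fst (snd x) ! j))"
    using s lt by linarith
  then have "mu3 n L y < mu3 n L x" unfolding mu3_def using bound3[OF w] by linarith
  then show ?thesis using ex by (simp add: murel_def mu1_def mu2_def)
qed

lemma smallerC:
  assumes p: "Suc p < n" and ex: "fst y = fst x" "fst (snd y) = fst (snd x)"
    and agree: "\<And>j. j < n \<Longrightarrow> j \<noteq> p \<Longrightarrow> j \<noteq> Suc p \<Longrightarrow> snd (snd y) ! j = snd (snd x) ! j"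
    and sw: "snd (snd y) ! p = snd (snd x) ! Suc p" "snd (snd y) ! Suc p = snd (snd x) ! p"
    and lt: "snd (snd x) ! p < snd (snd x) ! Suc p"
  shows "(y, x) \<in> murel n K L"
proof -
  have s: "(\<Sum>j<n. int (Suc j) * int (snd (snd y) ! j)) = (\<Sum>j<n. int (Suc j) * int (snd (snd x) ! j))
      + (int (Suc p) * int (snd (snd y) ! p) - int (Suc p) * int (snd (snd x) ! p))
      + (int (Suc (Suc p)) * int (snd (snd y) ! Suc p) - int (Suc (Suc p)) * int (snd (snd x) ! Suc p))"
    using pair_sum[OF p, of "snd (snd y)" "snd (snd x)" "\<lambda>j v. int (Suc j) * int v"] agree by simp
  have "(int (Suc p) * int (snd (snd y) ! p) - int (Suc p) * int (snd (snd x) ! p))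
      + (int (Suc (Suc p)) * int (snd (snd y) ! Suc p) - int (Suc (Suc p)) * int (snd (snd x) ! Suc p))
      = int (snd (snd x) ! p) - int (snd (snd x) ! Suc p)" using sw by (simp add: algebra_simps)
  then have "(\<Sum>j<n. int (Suc j) * int (snd (snd y) ! j)) < (\<Sum>j<n. int (Suc j) * int (snd (snd x) ! j))"
    using s lt by linarith
  moreover have "0 \<le> (\<Sum>j<n. int (Suc j) * int (snd (snd y) ! j))" by (intro sum_nonneg) simp
  ultimately have "mu4 n y < mu4 n x" unfolding mu4_def by linarith
  then show ?thesis using ex by (simp add: murel_def mu1_def mu2_def mu3_def)
qed


definition bad :: "lbl \<Rightarrow> nat \<Rightarrow> bool" where
  "bad x i = (fst x ! i < fst x ! (i - 1) \<or> (fst x ! (i - 1) = fst x ! i \<and>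
     (fst (snd x) ! i < fst (snd x) ! (i - 1) \<or> (fst (snd x) ! (i - 1) = fst (snd x) ! i \<and>
       snd (snd x) ! (i - 1) \<le> snd (snd x) ! i))))"

definition WG :: "nat \<Rightarrow> nat \<Rightarrow> nat \<Rightarrow> vec set" where
  "WG N L n = {Tcop N L n i f - Tsop N i f | i f. 1 \<le> i \<and> i < n \<and> f \<in> Vn N L n}"

lemma Wsub_WG: "Wsub N L n = lspan (WG N L n)" by (simp add: Wsub_def WG_def)

lemma WG_rel: "1 \<le> i \<Longrightarrow> i < n \<Longrightarrow> f \<in> Vn N L n \<Longrightarrow> Tcop N L n i f - Tsop N i f \<in> lspan (WG N L n)"
  using W_rel Wsub_WG by metis

lemma lspan_comb: "u \<in> lspan B \<Longrightarrow> v \<in> lspan B \<Longrightarrow> sc a u + sc b v \<in> lspan B"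
  by (intro lspan_add lspan_sc)

lemma alg_A3: "sc (q^2) X - (sc q TY - sc (q^2 - 1) TX) = sc (q^2 - 1) (TX - sc q Y) + sc (-q) (TY - (sc q X + sc (q^2 - 1) Y))"
  by (simp add: kap_simps algebra_simps power2_eq_square)
lemma alg_B3: "sc (q^2) X - (- sc (q^2) Ys + sc (q * (q^2 - 1)) Xs) =
   sc (q^2 - 1) ((- sc q Xs) - sc q Y) + sc (-q) ((- sc q Ys) - (sc q X + sc (q^2 - 1) Y))"
  by (simp add: kap_simps algebra_simps power2_eq_square)


lemma straight:
  fixes N L n :: nat and K D :: int and A :: "vec set"
  assumes normal: "\<And>x. wf_lbl N L n x \<Longrightarrow> good K D x \<Longrightarrow> (\<forall>i. 1 \<le> i \<and> i < n \<longrightarrow> \<not> bad x i)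
      \<Longrightarrow> Rr A (WG N L n) (bv x)"
  shows "wf_lbl N L n x \<longrightarrow> good K D x \<longrightarrow> Rr A (WG N L n) (bv x)"
proof (induction x rule: wf_induct_rule[OF wf_murel[of n K L]])
  case (1 x)
  show ?case
  proof (intro impI)
    assume w: "wf_lbl N L n x" and g: "good K D x"
    have IH: "\<And>z. (z, x) \<in> murel n K L \<Longrightarrow> wf_lbl N L n z \<Longrightarrow> good K D z \<Longrightarrow> Rr A (WG N L n) (bv z)"
      using 1 by blast
    show "Rr A (WG N L n) (bv x)"
    proof (cases "\<exists>i. 1 \<le> i \<and> i < n \<and> bad x i")
      case False
      then show ?thesis using normal[OF w g] by blast
    next
      case True
      then obtain i where i: "1 \<le> i" "i < n" and bx: "bad x i" by blast
      obtain ex es vs where xe: "x = (ex, es, vs)" by (cases x) auto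
      have len: "length ex = n" "length es = n" "length vs = n" using w xe by (auto simp: wf_lbl_iff)
      have si: "Suc (i - 1) = i" and i1: "i - 1 < n" using i by auto
      define q where "q = qpar N"
      have qnz: "q \<noteq> 0" unfolding q_def by (rule qpar_nz)
      define y where "y = swV i x"
      have ye: "y = (ex, es, swp i vs)" by (simp add: y_def swV_def xe)
      have wy: "wf_lbl N L n y" using w swp_set[of i vs] len i by (simp add: ye xe wf_lbl_iff)
      have gy: "good K D y" using g by (simp add: ye xe good_def)
      have yv: "swp i vs ! (i - 1) = vs ! i" "swp i vs ! i = vs ! (i - 1)" using len i by (simp_all add: swp_nth)
      have yy: "swV i y = x" using swp_swp[of i vs] len i by (simp add: ye xe swV_def)
      have X: "bv x \<in> Vn N L n" "bv y \<in> Vn N L n" using w wy by auto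
      have W1: "Tcop N L n i (bv x) - Tsop N i (bv x) \<in> lspan (WG N L n)" by (rule WG_rel[OF i X(1)])
      have W2: "Tcop N L n i (bv y) - Tsop N i (bv y) \<in> lspan (WG N L n)" by (rule WG_rel[OF i X(2)])
      have finish: "\<And>c G. c \<noteq> 0 \<Longrightarrow> Rr A (WG N L n) G \<Longrightarrow> sc c (bv x) - G \<in> lspan (WG N L n)
          \<Longrightarrow> Rr A (WG N L n) (bv x)"
        using Rr_equiv Rr_unsc by blast
      consider "ex ! i < ex ! (i - 1)" | "ex ! (i - 1) = ex ! i" using bx by (auto simp: bad_def xe)
      then show ?thesis
      proof cases
        case 1
        have TA: "Rr A (WG N L n) (Tcop N L n i (bv z))" if wz: "wf_lbl N L n z" and gz: "good K D z"
          and fz: "fst z = ex" for z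
        proof (rule Rr_supp)
          show "finite (supp (Tcop N L n i (bv z)))" using T_Vn[OF i Vn_bv[OF wz]] by (simp add: Vn_iff)
          fix u assume u: "u \<in> supp (Tcop N L n i (bv z))"
          have ib: "inbox N L n i z u" using T_bv[OF i wz] u by blast
          have wu: "wf_lbl N L n u" using ib by (simp add: inbox_def)
          have gu: "good K D u" using inbox_good[OF i wz gz ib] .
          have lu: "length (fst u) = n" using wu by (cases u) (simp add: wf_lbl_iff)
          have c1: "\<And>j. j < n \<Longrightarrow> j \<noteq> i - 1 \<Longrightarrow> j \<noteq> i \<Longrightarrow> fst u ! j = fst x ! j"
            using ib fz by (auto simp: inbox_def xe)
          have c2: "fst u ! (i - 1) + fst u ! i = fst x ! (i - 1) + fst x ! i"
            and c3: "fst x ! i \<le> fst u ! (i - 1)" and c4: "fst u ! (i - 1) < fst x ! (i - 1)"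
            using ib fz 1 by (auto simp: inbox_def xe)
          have "(u, x) \<in> murel n K L"
            using smallerA[of "i - 1" n u K D x L] si i lu gu c1 c2 c3 c4 by simp
          then show "Rr A (WG N L n) (bv u)" using IH wu gu by blast
        qed
        have TAx: "Rr A (WG N L n) (Tcop N L n i (bv x))" using TA[OF w g] by (simp add: xe)
        have TAy: "Rr A (WG N L n) (Tcop N L n i (bv y))" using TA[OF wy gy] by (simp add: ye)
        consider "vs ! (i - 1) = vs ! i" | "vs ! i < vs ! (i - 1)" | "vs ! (i - 1) < vs ! i" by linarith
        then show ?thesis
        proof cases
          case 1
          have Ts: "Tsop N i (bv x) = sc (q^2) (bv x)" using 1 by (simp add: xe Tsop_bv q_def)
          show ?thesis
          proof (rule finish[of "q^2" "Tcop N L n i (bv x)"])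
            show "q^2 \<noteq> 0" using qnz by simp
            show "Rr A (WG N L n) (Tcop N L n i (bv x))" by (rule TAx)
            have "sc (q^2) (bv x) - Tcop N L n i (bv x) = sc (-1) (Tcop N L n i (bv x) - Tsop N i (bv x))"
              unfolding Ts by (simp add: kap_simps algebra_simps)
            then show "sc (q^2) (bv x) - Tcop N L n i (bv x) \<in> lspan (WG N L n)" using W1 lspan_sc by metis
          qed
        next
          case 2
          have Ts: "Tsop N i (bv y) = sc q (bv x)" using 2 yv yy by (simp add: ye Tsop_bv q_def)
          show ?thesis
          proof (rule finish[of q "Tcop N L n i (bv y)"])
            show "q \<noteq> 0" by (rule qnz)
            show "Rr A (WG N L n) (Tcop N L n i (bv y))" by (rule TAy)
            have "sc q (bv x) - Tcop N L n i (bv y) = sc (-1) (Tcop N L n i (bv y) - Tsop N i (bv y))"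
              unfolding Ts by (simp add: kap_simps algebra_simps)
            then show "sc q (bv x) - Tcop N L n i (bv y) \<in> lspan (WG N L n)" using W2 lspan_sc by metis
          qed
        next
          case 3
          have Ts1: "Tsop N i (bv x) = sc q (bv y)" using 3 by (simp add: xe ye Tsop_bv q_def swV_def)
          have Ts2: "Tsop N i (bv y) = sc q (bv x) + sc (q^2 - 1) (bv y)" using 3 yv yy
            by (simp add: ye Tsop_bv q_def)
          show ?thesis
          proof (rule finish[of "q^2" "sc q (Tcop N L n i (bv y)) - sc (q^2 - 1) (Tcop N L n i (bv x))"])
            show "q^2 \<noteq> 0" using qnz by simp
            show "Rr A (WG N L n) (sc q (Tcop N L n i (bv y)) - sc (q^2 - 1) (Tcop N L n i (bv x)))"
              using TAx TAy by (intro Rr_diff Rr_sc)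
            show "sc (q^2) (bv x) - (sc q (Tcop N L n i (bv y)) - sc (q^2 - 1) (Tcop N L n i (bv x))) \<in> lspan (WG N L n)"
            proof -
              have e: "sc (q^2) (bv x) - (sc q (Tcop N L n i (bv y)) - sc (q^2 - 1) (Tcop N L n i (bv x)))
                 = sc (q^2 - 1) (Tcop N L n i (bv x) - Tsop N i (bv x)) + sc (-q) (Tcop N L n i (bv y) - Tsop N i (bv y))"
                unfolding Ts1 Ts2 by (rule alg_A3)
              show ?thesis unfolding e by (rule lspan_comb[OF W1 W2])
            qed
          qed
        qed
      next
        case 2
        have eqx: "fst x ! (i - 1) = fst x ! i" using 2 by (simp add: xe)
        have eqy: "fst y ! (i - 1) = fst y ! i" using 2 by (simp add: ye)
        have TB: "Tcop N L n i (bv x) = hb N i x" using T_base[OF i w eqx] .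
        have TBy: "Tcop N L n i (bv y) = hb N i y" using T_base[OF i wy eqy] .
        have bes: "es ! i < es ! (i - 1) \<or> (es ! (i - 1) = es ! i \<and> vs ! (i - 1) \<le> vs ! i)"
          using bx 2 by (simp add: bad_def xe)
        show ?thesis
        proof (cases "es ! i < es ! (i - 1)")
          case True
          define xs where "xs = swE i x"
          define ys where "ys = swE i y"
          have xse: "xs = (ex, swp i es, vs)" by (simp add: xs_def swE_def xe)
          have yse: "ys = (ex, swp i es, swp i vs)" by (simp add: ys_def swE_def ye)
          have es': "swp i es ! (i - 1) = es ! i" "swp i es ! i = es ! (i - 1)" using len i by (simp_all add: swp_nth)
          have agr: "\<And>j. j < n \<Longrightarrow> j \<noteq> i - 1 \<Longrightarrow> j \<noteq> i \<Longrightarrow> swp i es ! j = es ! j"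
            using len i by (simp add: swp_nth)
          have wxs: "wf_lbl N L n xs" "wf_lbl N L n ys" using wf_swE[OF i w] wf_swE[OF i wy] by (simp_all add: xs_def ys_def)
          have gxs: "good K D xs" "good K D ys" using g by (simp_all add: xse yse xe good_def)
          have Rxs: "Rr A (WG N L n) (bv xs)"
            using IH[OF smallerB[of "i - 1" n N L xs x K] wxs(1) gxs(1)] si i True es' agr wxs
            by (simp add: xse xe)
          have Rys: "Rr A (WG N L n) (bv ys)"
            using IH[OF smallerB[of "i - 1" n N L ys x K] wxs(2) gxs(2)] si i True es' agr wxs
            by (simp add: yse xe)
          have H: "hb N i x = - sc q (bv xs)" using True by (simp add: hb_def Let_def xe xs_def q_def)
          have Hy: "hb N i y = - sc q (bv ys)" using True by (simp add: hb_def Let_def ye ys_def q_def)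
          consider "vs ! (i - 1) = vs ! i" | "vs ! i < vs ! (i - 1)" | "vs ! (i - 1) < vs ! i" by linarith
          then show ?thesis
          proof cases
            case 1
            have Ts: "Tsop N i (bv x) = sc (q^2) (bv x)" using 1 by (simp add: xe Tsop_bv q_def)
            show ?thesis
            proof (rule finish[of "q^2" "- sc q (bv xs)"])
              show "q^2 \<noteq> 0" using qnz by simp
              show "Rr A (WG N L n) (- sc q (bv xs))" using Rxs by (intro Rr_minus Rr_sc)
              have "sc (q^2) (bv x) - - sc q (bv xs) = sc (-1) (Tcop N L n i (bv x) - Tsop N i (bv x))"
                unfolding Ts TB H by (simp add: kap_simps algebra_simps)
              then show "sc (q^2) (bv x) - - sc q (bv xs) \<in> lspan (WG N L n)" using W1 lspan_sc by metis
            qed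
          next
            case 2
            have Ts: "Tsop N i (bv y) = sc q (bv x)" using 2 yv yy by (simp add: ye Tsop_bv q_def)
            show ?thesis
            proof (rule finish[of q "- sc q (bv ys)"])
              show "q \<noteq> 0" by (rule qnz)
              show "Rr A (WG N L n) (- sc q (bv ys))" using Rys by (intro Rr_minus Rr_sc)
              have "sc q (bv x) - - sc q (bv ys) = sc (-1) (Tcop N L n i (bv y) - Tsop N i (bv y))"
                unfolding Ts TBy Hy by (simp add: kap_simps algebra_simps)
              then show "sc q (bv x) - - sc q (bv ys) \<in> lspan (WG N L n)" using W2 lspan_sc by metis
            qed
          next
            case 3
            have Ts1: "Tsop N i (bv x) = sc q (bv y)" using 3 by (simp add: xe ye Tsop_bv q_def swV_def)
            have Ts2: "Tsop N i (bv y) = sc q (bv x) + sc (q^2 - 1) (bv y)" using 3 yv yy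
              by (simp add: ye Tsop_bv q_def)
            show ?thesis
            proof (rule finish[of "q^2" "- sc (q^2) (bv ys) + sc (q * (q^2 - 1)) (bv xs)"])
              show "q^2 \<noteq> 0" using qnz by simp
              show "Rr A (WG N L n) (- sc (q^2) (bv ys) + sc (q * (q^2 - 1)) (bv xs))"
                using Rxs Rys by (intro Rr_add Rr_minus Rr_sc)
              show "sc (q^2) (bv x) - (- sc (q^2) (bv ys) + sc (q * (q^2 - 1)) (bv xs)) \<in> lspan (WG N L n)"
              proof -
                have e: "sc (q^2) (bv x) - (- sc (q^2) (bv ys) + sc (q * (q^2 - 1)) (bv xs))
                   = sc (q^2 - 1) (Tcop N L n i (bv x) - Tsop N i (bv x)) + sc (-q) (Tcop N L n i (bv y) - Tsop N i (bv y))"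
                  unfolding Ts1 Ts2 TB TBy H Hy by (rule alg_B3)
                show ?thesis unfolding e by (rule lspan_comb[OF W1 W2])
              qed
            qed
          qed
        next
          case False
          then have ee: "es ! (i - 1) = es ! i" and vle: "vs ! (i - 1) \<le> vs ! i" using bes by auto
          have H: "hb N i x = - bv x" using ee by (simp add: hb_def Let_def xe)
          show ?thesis
          proof (cases "vs ! (i - 1) = vs ! i")
            case True
            have Ts: "Tsop N i (bv x) = sc (q^2) (bv x)" using True by (simp add: xe Tsop_bv q_def)
            have q1: "1 + q^2 \<noteq> 0" unfolding q_def by (rule qpar_sq1)
            show ?thesis
            proof (rule finish[of "1 + q^2" 0])
              show "1 + q^2 \<noteq> 0" by (rule q1)
              show "Rr A (WG N L n) 0" by (rule Rr_zero)
              have "sc (1 + q^2) (bv x) - 0 = sc (-1) (Tcop N L n i (bv x) - Tsop N i (bv x))"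
                unfolding Ts TB H by (simp add: kap_simps algebra_simps)
              then show "sc (1 + q^2) (bv x) - 0 \<in> lspan (WG N L n)" using W1 lspan_sc by metis
            qed
          next
            case False
            then have vlt: "vs ! (i - 1) < vs ! i" using vle by simp
            have Ts: "Tsop N i (bv x) = sc q (bv y)" using vlt by (simp add: xe ye Tsop_bv q_def swV_def)
            have agv: "\<And>j. j < n \<Longrightarrow> j \<noteq> i - 1 \<Longrightarrow> j \<noteq> i \<Longrightarrow> swp i vs ! j = vs ! j"
              using len i by (simp add: swp_nth)
            have Ry: "Rr A (WG N L n) (bv y)"
              using IH[OF smallerC[of "i - 1" n y x K L] wy gy] si i vlt yv agv
              by (simp add: ye xe)
            show ?thesis
            proof (rule finish[of 1 "- sc q (bv y)"])
              show "(1::kf) \<noteq> 0" by simp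
              show "Rr A (WG N L n) (- sc q (bv y))" using Ry by (intro Rr_minus Rr_sc)
              have "sc 1 (bv x) - - sc q (bv y) = sc (-1) (Tcop N L n i (bv x) - Tsop N i (bv x))"
                unfolding Ts TB H by (simp add: kap_simps algebra_simps)
              then show "sc 1 (bv x) - - sc q (bv y) \<in> lspan (WG N L n)" using W1 lspan_sc by metis
            qed
          qed
        qed
      qed
    qed
  qed
qed


lemma small_mult_zero: "\<bar>x\<bar> < int N \<Longrightarrow> x = int N * m \<Longrightarrow> x = (0::int)"
proof (rule ccontr)
  assume a: "\<bar>x\<bar> < int N" "x = int N * m" "x \<noteq> 0"
  then have "m \<noteq> 0" by auto
  then have "1 \<le> \<bar>m\<bar>" by linarith
  then have "int N \<le> int N * \<bar>m\<bar>" by (simp add: mult_le_cancel_left1)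
  also have "\<dots> = \<bar>x\<bar>" using a by (simp add: abs_mult)
  finally show False using a by simp
qed

lemma kdecomp:
  assumes N: "1 \<le> N" and L: "1 \<le> L"
  shows "k = int (kbar N k) - int N * (int (kdot N L k) + int L * kund N L k) \<and>
    1 \<le> kbar N k \<and> kbar N k \<le> N \<and> 1 \<le> kdot N L k \<and> kdot N L k \<le> L"
proof -
  define r where "r = (k - 1) mod int N"
  have r: "0 \<le> r" "r < int N" using N by (simp_all add: r_def)
  have kb: "int (kbar N k) = r + 1" using r by (simp add: kbar_def r_def)
  have kbr: "1 \<le> kbar N k" "kbar N k \<le> N" using kb r by linarith+
  define t where "t = (int (kbar N k) - k) div int N"
  have "k - 1 = int N * ((k - 1) div int N) + r" unfolding r_def by simp
  then have kt0: "int (kbar N k) - k = int N * (- ((k - 1) div int N))" using kb by (simp add: algebra_simps)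
  then have kt: "int (kbar N k) - k = int N * t" unfolding t_def using N by simp
  define s where "s = (t - 1) mod int L"
  have s: "0 \<le> s" "s < int L" using L by (simp_all add: s_def)
  have kd: "int (kdot N L k) = s + 1" using s by (simp add: kdot_def s_def t_def)
  have kdr: "1 \<le> kdot N L k" "kdot N L k \<le> L" using kd s by linarith+
  have "t - 1 = int L * ((t - 1) div int L) + s" unfolding s_def by simp
  then have ts: "t - int (kdot N L k) = int L * ((t - 1) div int L)" using kd by (simp add: algebra_simps)
  have ku: "kund N L k = (t - 1) div int L"
    unfolding kund_def t_def[symmetric] ts using L by simp
  have "k = int (kbar N k) - int N * (int (kdot N L k) + int L * kund N L k)"
    using kt ts ku by (simp add: algebra_simps)
  then show ?thesis using kbr kdr by simp
qed

lemma kunique: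
  assumes N: "1 \<le> N" and L: "1 \<le> L" and v: "1 \<le> v" "v \<le> N" and e: "1 \<le> e" "e \<le> L"
    and k: "k = int v - int N * (int e + int L * a)"
  shows "kbar N k = v \<and> kdot N L k = e \<and> kund N L k = a"
proof -
  have d: "k = int (kbar N k) - int N * (int (kdot N L k) + int L * kund N L k)"
    and b: "1 \<le> kbar N k" "kbar N k \<le> N" "1 \<le> kdot N L k" "kdot N L k \<le> L"
    using kdecomp[OF N L, of k] by auto
  have dk: "int v - int N * (int e + int L * a) = int (kbar N k) - int N * (int (kdot N L k) + int L * kund N L k)"
    using d k by metis
  have "int v - int (kbar N k) = int N * ((int e + int L * a) - (int (kdot N L k) + int L * kund N L k))"
    using dk by (simp add: algebra_simps)
  moreover have "\<bar>int v - int (kbar N k)\<bar> < int N" using v b by linarith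
  ultimately have vv: "int v = int (kbar N k)" using small_mult_zero by fastforce
  then have "int N * ((int e + int L * a) - (int (kdot N L k) + int L * kund N L k)) = 0"
    using dk by (simp add: algebra_simps)
  then have "(int e + int L * a) - (int (kdot N L k) + int L * kund N L k) = 0" using N by simp
  then have ee: "int e - int (kdot N L k) = int L * (kund N L k - a)" by (simp add: algebra_simps)
  moreover have "\<bar>int e - int (kdot N L k)\<bar> < int L" using e b by linarith
  ultimately have "int e = int (kdot N L k)" using small_mult_zero by fastforce
  then have "int L * (kund N L k - a) = 0" using ee by simp
  then show ?thesis using vv \<open>int e = int (kdot N L k)\<close> L by simp
qed

lemma kund_mono:
  assumes N: "1 \<le> N" and L: "1 \<le> L" and le: "k2 \<le> k1"
  shows "kund N L k1 \<le> kund N L k2"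
proof (rule ccontr)
  assume "\<not> kund N L k1 \<le> kund N L k2"
  then have gt: "kund N L k2 + 1 \<le> kund N L k1" by simp
  have d1: "k1 = int (kbar N k1) - int N * (int (kdot N L k1) + int L * kund N L k1)"
    and b1: "kbar N k1 \<le> N" "1 \<le> kdot N L k1"
    and d2: "k2 = int (kbar N k2) - int N * (int (kdot N L k2) + int L * kund N L k2)"
    and b2: "1 \<le> kbar N k2" "kdot N L k2 \<le> L"
    using kdecomp[OF N L, of k1] kdecomp[OF N L, of k2] by auto
  have m1: "int L * (kund N L k2 + 1) \<le> int L * kund N L k1" using gt L by simp
  have "int (kdot N L k2) + int L * kund N L k2 < int (kdot N L k1) + int L * kund N L k1"
    using m1 b1 b2 by (simp add: algebra_simps)
  then have "int N * (int (kdot N L k2) + int L * kund N L k2) + int N \<le> int N * (int (kdot N L k1) + int L * kund N L k1)"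
    using N by (metis add.commute int_one_le_iff_zero_less mult.right_neutral not_less_iff_gr_or_eq
        of_nat_0_less_iff order_less_le_trans zero_less_one zless_imp_add1_zle distrib_left mult_le_cancel_left_pos)
  then have "k1 < k2" using d1 d2 b1 b2 by linarith
  then show False using le by simp
qed


lemma sum_shift1:
  fixes n :: nat and f :: "nat \<Rightarrow> int"
  shows "(\<Sum>i=1..n. f (i - 1)) = (\<Sum>j<n. f j)"
  by (induction n) (simp_all add: add.commute)

lemma sum_list_nth: "length xs = n \<Longrightarrow> sum_list xs = (\<Sum>j<n. xs ! j :: int)"
  by (simp add: sum_list_sum_nth atLeast0LessThan)

context
  fixes N L :: nat and M :: int and n :: nat and d :: int
  assumes N: "1 \<le> N" and L: "1 \<le> L"
begin

definition "KK = kund N L (M - int n + 1)"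
definition "DD = (\<Sum>i=1..n. kund N L (M - int i + 1)) - d"

lemma Bd_good: "x \<in> Bd N L M n d \<Longrightarrow> wf_lbl N L n x \<and> good KK DD x"
proof -
  assume "x \<in> Bd N L M n d"
  then obtain ks where x: "x = ulab N L ks" and l: "length ks = n" and so: "sorted_wrt (>) ks"
    and la: "n > 0 \<longrightarrow> kund N L (last ks) \<le> kund N L (M - int n + 1)"
    and dg: "(\<Sum>i=1..n. kund N L (M - int i + 1) - kund N L (ks ! (i - 1))) = d"
    unfolding Bd_def by blast
  have kb: "\<And>k. 1 \<le> kbar N k \<and> kbar N k \<le> N \<and> 1 \<le> kdot N L k \<and> kdot N L k \<le> L"
    using kdecomp[OF N L] by blast
  have w: "wf_lbl N L n x" using l kb by (auto simp: x ulab_def wf_lbl_iff)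
  have Kb: "kund N L (ks ! j) \<le> KK" if j: "j < n" for j
  proof -
    have n0: "n > 0" using j by simp
    have "ks \<noteq> []" using l n0 by auto
    then have lst: "last ks = ks ! (n - 1)" using l by (simp add: last_conv_nth)
    have "ks ! (n - 1) \<le> ks ! j"
    proof (cases "j = n - 1")
      case False
      then have "j < n - 1" using j by simp
      then show ?thesis using sorted_wrt_nth_less[OF so, of j "n - 1"] l n0 by simp
    qed simp
    then have "kund N L (ks ! j) \<le> kund N L (last ks)" unfolding lst by (rule kund_mono[OF N L])
    then show ?thesis using la n0 by (simp add: KK_def)
  qed
  have g1: "\<forall>a\<in>set (map (kund N L) ks). a \<le> KK" using Kb l by (auto simp: in_set_conv_nth)
  have "(\<Sum>i=1..n. kund N L (M - int i + 1)) - (\<Sum>i=1..n. kund N L (ks ! (i - 1))) = d"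
    using dg by (simp add: sum_subtractf)
  then have "sum_list (map (kund N L) ks) = DD"
    using sum_shift1[of "\<lambda>j. kund N L (ks ! j)" n] sum_list_nth[of "map (kund N L) ks" n] l
    by (simp add: DD_def)
  then show ?thesis using w g1 by (simp add: x ulab_def good_def)
qed

lemma normal_Bd:
  assumes w: "wf_lbl N L n x" and g: "good KK DD x" and nb: "\<forall>i. 1 \<le> i \<and> i < n \<longrightarrow> \<not> bad x i"
  shows "x \<in> Bd N L M n d"
proof -
  obtain ex es vs where xe: "x = (ex, es, vs)" by (cases x) auto
  have len: "length ex = n" "length es = n" "length vs = n" using w xe by (auto simp: wf_lbl_iff)
  have eb: "\<And>j. j < n \<Longrightarrow> 1 \<le> es ! j \<and> es ! j \<le> L" and vb: "\<And>j. j < n \<Longrightarrow> 1 \<le> vs ! j \<and> vs ! j \<le> N"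
    using w len by (auto simp: xe wf_lbl_iff)
  define kf where "kf j = int (vs ! j) - int N * (int (es ! j) + int L * ex ! j)" for j
  define ks where "ks = map kf [0..<n]"
  have lk: "length ks = n" by (simp add: ks_def)
  have ksj: "\<And>j. j < n \<Longrightarrow> ks ! j = kf j" by (simp add: ks_def)
  have ku: "\<And>j. j < n \<Longrightarrow> kbar N (kf j) = vs ! j \<and> kdot N L (kf j) = es ! j \<and> kund N L (kf j) = ex ! j"
    using kunique[OF N L] eb vb by (simp add: kf_def)
  have ul: "ulab N L ks = x"
    unfolding ulab_def xe using len ku ksj lk by (auto intro!: nth_equalityI)
  have adj: "ks ! Suc j < ks ! j" if j: "Suc j < n" for j
  proof -
    have nbj: "\<not> bad x (Suc j)" using nb j by simp
    have c: "ex ! j \<le> ex ! Suc j" "ex ! j = ex ! Suc j \<Longrightarrow> es ! j \<le> es ! Suc j"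
      "ex ! j = ex ! Suc j \<Longrightarrow> es ! j = es ! Suc j \<Longrightarrow> vs ! Suc j < vs ! j"
      using nbj by (auto simp: bad_def xe)
    have bj: "1 \<le> es ! j" "es ! j \<le> L" "1 \<le> es ! Suc j" "es ! Suc j \<le> L"
      "1 \<le> vs ! j" "vs ! j \<le> N" "1 \<le> vs ! Suc j" "vs ! Suc j \<le> N" using eb vb j by auto
    have diff: "kf j - kf (Suc j) = (int (vs ! j) - int (vs ! Suc j)) + int N * (int (es ! Suc j) - int (es ! j))
        + int N * int L * (ex ! Suc j - ex ! j)" by (simp add: kf_def algebra_simps)
    have "kf (Suc j) < kf j"
    proof (cases "ex ! j < ex ! Suc j")
      case True
      have h1: "int N * int L \<le> int N * int L * (ex ! Suc j - ex ! j)" using True N L by simp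
      have h2: "int N * (1 - int L) \<le> int N * (int (es ! Suc j) - int (es ! j))" using bj N by simp
      have "1 - int N \<le> int (vs ! j) - int (vs ! Suc j)" using bj by linarith
      then show ?thesis using diff h1 h2 by (simp add: algebra_simps)
    next
      case False
      then have ea: "ex ! j = ex ! Suc j" using c by simp
      show ?thesis
      proof (cases "es ! j < es ! Suc j")
        case True
        have h2: "int N \<le> int N * (int (es ! Suc j) - int (es ! j))" using True N by simp
        have "1 - int N \<le> int (vs ! j) - int (vs ! Suc j)" using bj by linarith
        then show ?thesis using diff h2 ea by simp
      next
        case False
        then have "es ! j = es ! Suc j" using c ea by simp
        then have "vs ! Suc j < vs ! j" using c ea by simp
        then show ?thesis using diff ea \<open>es ! j = es ! Suc j\<close> by simp
      qed
    qed
    then show ?thesis using ksj j by simp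
  qed
  have so: "sorted_wrt (>) ks"
    using sorted_wrt_iff_nth_Suc_transp[of "(>)" ks] adj lk by (auto simp: transp_def)
  have la: "n > 0 \<longrightarrow> kund N L (last ks) \<le> kund N L (M - int n + 1)"
  proof
    assume n0: "n > 0"
    have "ks \<noteq> []" using lk n0 by auto
    then have "last ks = kf (n - 1)" using lk n0 ksj by (simp add: last_conv_nth)
    then have "kund N L (last ks) = ex ! (n - 1)" using ku n0 by simp
    moreover have "ex ! (n - 1) \<in> set ex" using len n0 by simp
    ultimately show "kund N L (last ks) \<le> kund N L (M - int n + 1)" using g by (simp add: good_def xe KK_def)
  qed
  have "(\<Sum>i=1..n. kund N L (ks ! (i - 1))) = sum_list ex"
    using sum_shift1[of "\<lambda>j. kund N L (ks ! j)" n] sum_list_nth[OF len(1)] ku ksj by simp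
  then have dg: "(\<Sum>i=1..n. kund N L (M - int i + 1) - kund N L (ks ! (i - 1))) = d"
    using g by (simp add: sum_subtractf good_def xe DD_def)
  show ?thesis unfolding Bd_def using ul lk so la dg by blast
qed

end


lemma lspan_Sset: "f \<in> lspan A \<Longrightarrow> (\<And>g. g \<in> A \<Longrightarrow> g \<in> Sset N L n K D) \<Longrightarrow> f \<in> Sset N L n K D"
proof -
  assume f: "f \<in> lspan A" and h: "\<And>g. g \<in> A \<Longrightarrow> g \<in> Sset N L n K D"
  obtain B c where B: "finite B" "B \<subseteq> A" "f = (\<Sum>g\<in>B. sc (c g) g)" using f by (auto simp: lspan_def)
  have "(\<Sum>g\<in>B. sc (c g) g) \<in> Sset N L n K D"
  proof (rule Sset_sum)
    fix g assume "g \<in> B" then show "sc (c g) g \<in> Sset N L n K D" using B h by (intro Sset_sc) blast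
  qed
  then show ?thesis using B by simp
qed

lemma VMd_Sset: "1 \<le> N \<Longrightarrow> 1 \<le> L \<Longrightarrow> f \<in> VMd N L M n d \<Longrightarrow> f \<in> Sset N L n (KK N L M n) (DD N L M n d)"
  unfolding VMd_def
proof (rule lspan_Sset)
  fix g assume N: "1 \<le> N" and L: "1 \<le> L" and "g \<in> bv ` Bd N L M n d"
  then obtain x where x: "x \<in> Bd N L M n d" "g = bv x" by blast
  show "g \<in> Sset N L n (KK N L M n) (DD N L M n d)" using Bd_good[OF N L x(1)] x(2) Sset_bv by blast
qed

lemma Sset_Rr:
  assumes N: "1 \<le> N" and L: "1 \<le> L" and f: "f \<in> Sset N L n (KK N L M n) (DD N L M n d)"
  shows "Rr (bv ` Bd N L M n d) (WG N L n) f"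
proof (rule Rr_supp)
  show "finite (supp f)" using Sset_Vn[OF f] by (simp add: Vn_iff)
  fix y assume y: "y \<in> supp f"
  have wg: "wf_lbl N L n y" "good (KK N L M n) (DD N L M n d) y" using Sset_supp[OF f y] by auto
  have "wf_lbl N L n y \<longrightarrow> good (KK N L M n) (DD N L M n d) y \<longrightarrow> Rr (bv ` Bd N L M n d) (WG N L n) (bv y)"
  proof (rule straight)
    fix x assume "wf_lbl N L n x" "good (KK N L M n) (DD N L M n d) x" "\<forall>i. 1 \<le> i \<and> i < n \<longrightarrow> \<not> bad x i"
    then have "x \<in> Bd N L M n d" using normal_Bd[OF N L] by blast
    then show "Rr (bv ` Bd N L M n d) (WG N L n) (bv x)" by (intro Rr_A) blast
  qed
  then show "Rr (bv ` Bd N L M n d) (WG N L n) (bv y)" using wg by blast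
qed

lemma stable_gen:
  assumes N: "1 \<le> N" and L: "1 \<le> L"
    and P: "\<And>f. f \<in> Sset N L n (KK N L M n) (DD N L M n d) \<Longrightarrow> \<phi> f \<in> Sset N L n (KK N L M n) (DD N L M n d)"
  shows "stable_mod (VMd N L M n d) (Wsub N L n) \<phi>"
  unfolding stable_mod_def
proof
  fix f assume f: "f \<in> VMd N L M n d"
  have "Rr (bv ` Bd N L M n d) (WG N L n) (\<phi> f)" using Sset_Rr[OF N L P[OF VMd_Sset[OF N L f]]] .
  then show "\<exists>g\<in>VMd N L M n d. \<phi> f - g \<in> Wsub N L n"
    unfolding Rr_def VMd_def Wsub_WG .
qed

theorem mainTheorem14:
  fixes N L s l n :: nat and M d pe :: int and \<nu> :: "nat \<Rightarrow> int"
  assumes "N \<ge> 2" and "L \<ge> 1"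
    and "s < N * L" and "M mod int (N * L) = int s"
    and "n = s + l * N * L" and "d \<ge> 0"
  shows "\<forall>i<N.
     stable_mod (VMd N L M n d) (Wsub N L n) (piE N L n pe \<nu> i) \<and>
     stable_mod (VMd N L M n d) (Wsub N L n) (piF N L n pe \<nu> i) \<and>
     stable_mod (VMd N L M n d) (Wsub N L n) (piK N n i)"
proof (intro allI impI conjI)
  fix i assume "i < N"
  have N: "1 \<le> N" using assms(1) by simp
  have L: "1 \<le> L" using assms(2) .
  show "stable_mod (VMd N L M n d) (Wsub N L n) (piE N L n pe \<nu> i)"
    by (rule stable_gen[OF N L]) (rule piE_Sset[OF N])
  show "stable_mod (VMd N L M n d) (Wsub N L n) (piF N L n pe \<nu> i)"
    by (rule stable_gen[OF N L]) (rule piF_Sset[OF N])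
  show "stable_mod (VMd N L M n d) (Wsub N L n) (piK N n i)"
    by (rule stable_gen[OF N L]) (rule piK_Sset)
qed


end
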